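(* Let $n\ge2$. The identity component of $\mathrm{Aut}(\mathfrak{ch}^n)$ is $\mathrm{Aut}_0(\mathfrak{ch}^n)=D\ltimes(Sp\ltimes T)$, where, in block form with block sizes $1,\,2n-2,\,1$, $$D=\left\{\begin{pmatrix}1&0&0\\0&\alpha I_{2n-2}&0\\0&0&\alpha^2\end{pmatrix}:\alpha>0\right\},\quad Sp=\left\{\begin{pmatrix}1&0&0\\0&M&0\\0&0&1\end{pmatrix}:M^TJ_{n-1}M=J_{n-1}\right\}\cong Sp(2n-2,\mathbb R),$$ $$T=\left\{\begin{pmatrix}1&0&0\\ \tfrac12 J_{n-1}v&I_{2n-2}&0\\ a&v^T&1\end{pmatrix}: a\in\mathbb R,\ v\in\mathbb R^{2n-2}\right\}.$$
   Context: $\mathfrak{ch}^n$ is the $2n$-dimensional real Lie algebra with basis $X,Y_1,\dots,Y_{n-1},Z_1,\dots,Z_{n-1},W$ whose only nonzero brackets (up to antisymmetry) are $[X,Y_i]=\tfrac12 Y_i$, $[X,Z_i]=\tfrac12 Z_i$, $[X,W]=W$, $[Z_j,Y_i]=\delta_{ij}W$ for $i,j\in\{1,\dots,n-1\}$. Linear maps are represented by matrices in this ordered basis (the $k$-th column is the coordinate vector of the image of the $k$-th basis vector). $J_{m}=\begin{pmatrix}0&I_m\\-I_m&0\end{pmatrix}$, $I_m$ the identity matrix. $\mathrm{Aut}(\mathfrak{ch}^n)$ is the group of Lie algebra automorphisms of $\mathfrak{ch}^n$. *)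

theory Defs
  imports "HOL-Analysis.Analysis"
begin

text \<open>For ch^n (dimension 2n) the ordered basis
X, Y_1..Y_(n-1), Z_1..Z_(n-1), W has indices 0, 1..n-1, n..2n-2, 2n-1.
The space of matrices carries the product (= Euclidean) topology.\<close>

type_synonym vec = "nat \<Rightarrow> real"
type_synonym mtx = "nat \<Rightarrow> nat \<Rightarrow> real"

definition Mats :: "nat \<Rightarrow> mtx set" where
  "Mats m = {A. \<forall>i j. (m \<le> i \<or> m \<le> j) \<longrightarrow> A i j = 0}"

definition mmul :: "nat \<Rightarrow> mtx \<Rightarrow> mtx \<Rightarrow> mtx" where
  "mmul m A B = (\<lambda>i j. if i < m \<and> j < m then (\<Sum>l<m. A i l * B l j) else 0)"

definition mvec :: "nat \<Rightarrow> mtx \<Rightarrow> vec \<Rightarrow> vec" where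
  "mvec m A u = (\<lambda>i. if i < m then (\<Sum>l<m. A i l * u l) else 0)"

definition mtrans :: "mtx \<Rightarrow> mtx" where
  "mtrans A = (\<lambda>i j. A j i)"

definition mid :: "nat \<Rightarrow> mtx" where
  "mid m = (\<lambda>i j. if i < m \<and> i = j then 1 else 0)"

definition invertible_mtx :: "nat \<Rightarrow> mtx \<Rightarrow> bool" where
  "invertible_mtx m A \<longleftrightarrow> (\<exists>B\<in>Mats m. mmul m A B = mid m \<and> mmul m B A = mid m)"

definition chbr :: "nat \<Rightarrow> vec \<Rightarrow> vec \<Rightarrow> vec" where
  "chbr n u v = (\<lambda>i.
     if 1 \<le> i \<and> i \<le> 2*n - 2 then (u 0 * v i - v 0 * u i) / 2
     else if i = 2*n - 1 then
       (u 0 * v (2*n-1) - v 0 * u (2*n-1))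
       + (\<Sum>p\<in>{1..n-1}. u (p + (n-1)) * v p - v (p + (n-1)) * u p)
     else 0)"

definition Aut_ch :: "nat \<Rightarrow> mtx set" where
  "Aut_ch n = {A \<in> Mats (2*n). invertible_mtx (2*n) A \<and>
      (\<forall>u v. mvec (2*n) A (chbr n u v) = chbr n (mvec (2*n) A u) (mvec (2*n) A v))}"

definition Aut0_ch :: "nat \<Rightarrow> mtx set" where
  "Aut0_ch n = connected_component_of_set (subtopology euclidean (Aut_ch n)) (mid (2*n))"

definition Jmat :: "nat \<Rightarrow> mtx" where
  "Jmat k = (\<lambda>p q. if p < k \<and> q = p + k then 1
                   else if k \<le> p \<and> p < 2*k \<and> q + k = p then -1 else 0)"

definition Dgrp :: "nat \<Rightarrow> mtx set" where
  "Dgrp n = {(\<lambda>i j. if i = 0 \<and> j = 0 then 1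
                    else if 1 \<le> i \<and> i \<le> 2*n-2 \<and> i = j then \<alpha>
                    else if i = 2*n-1 \<and> j = 2*n-1 then \<alpha>^2 else 0) | \<alpha>::real. \<alpha> > 0}"

definition Spgrp :: "nat \<Rightarrow> mtx set" where
  "Spgrp n = {(\<lambda>i j. if i = 0 \<and> j = 0 then 1
                    else if 1 \<le> i \<and> i \<le> 2*n-2 \<and> 1 \<le> j \<and> j \<le> 2*n-2 then M (i-1) (j-1)
                    else if i = 2*n-1 \<and> j = 2*n-1 then 1 else 0) | M.
       M \<in> Mats (2*n-2) \<and>
       mmul (2*n-2) (mmul (2*n-2) (mtrans M) (Jmat (n-1))) M = Jmat (n-1)}"

definition Tgrp :: "nat \<Rightarrow> mtx set" where
  "Tgrp n = {(\<lambda>i j. if i = j \<and> i < 2*n then 1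
                    else if 1 \<le> i \<and> i \<le> 2*n-2 \<and> j = 0 then mvec (2*n-2) (Jmat (n-1)) v (i-1) / 2
                    else if i = 2*n-1 \<and> j = 0 then a
                    else if i = 2*n-1 \<and> 1 \<le> j \<and> j \<le> 2*n-2 then v (j-1) else 0) | a v.
       (\<forall>p\<ge>2*n-2. v p = (0::real))}"

end

theory Submission
  imports Defs
begin


definition Om :: "nat \<Rightarrow> vec \<Rightarrow> vec \<Rightarrow> real" where
  "Om m x y = (\<Sum>q<m. x q * y (q+m) - x (q+m) * y q)"

definition ek :: "nat \<Rightarrow> vec" where "ek i = (\<lambda>p. if p = i then 1 else 0)"
definition col :: "mtx \<Rightarrow> nat \<Rightarrow> vec" where "col M j = (\<lambda>i. M i j)"
definition dot :: "nat \<Rightarrow> vec \<Rightarrow> vec \<Rightarrow> real" where "dot k r x = (\<Sum>l<k. r l * x l)"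

lemma sum_split2: "(\<Sum>l<2*(m::nat). f l) = (\<Sum>q<m. f q) + (\<Sum>q<m. f (q+m)::'a::comm_monoid_add)"
proof -
  have "(\<Sum>l<2*m. f l) = sum f {0..<m} + sum f {m..<2*m}"
    unfolding lessThan_atLeast0 by (rule sum.atLeastLessThan_concat[symmetric]) auto
  moreover have "sum f {m..<2*m} = sum f {0+m..<m+m}" by (simp add: mult_2)
  moreover have "\<dots> = (\<Sum>q<m. f (q+m))" unfolding sum.shift_bounds_nat_ivl lessThan_atLeast0 ..
  ultimately show ?thesis by (simp add: lessThan_atLeast0)
qed

lemma Om_cong: "(\<And>i. i < 2*m \<Longrightarrow> x i = x' i) \<Longrightarrow> (\<And>i. i < 2*m \<Longrightarrow> y i = y' i) \<Longrightarrow> Om m x y = Om m x' y'"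
  unfolding Om_def by (intro sum.cong) auto

lemma Om_antisym: "Om m x y = - Om m y x"
  unfolding Om_def by (subst sum_negf[symmetric]) (rule sum.cong, auto simp: algebra_simps)

lemma Om_self[simp]: "Om m x x = 0"
  using Om_antisym[of m x x] by simp

lemma Om_lin1: "Om m (\<lambda>i. a * x i + b * y i) z = a * Om m x z + b * Om m y z"
  unfolding Om_def sum_distrib_left sum.distrib[symmetric] sum_subtractf[symmetric] 
  by (rule sum.cong) (auto simp: algebra_simps)

lemma Om_lin2: "Om m z (\<lambda>i. a * x i + b * y i) = a * Om m z x + b * Om m z y"
  unfolding Om_def sum_distrib_left sum.distrib[symmetric] sum_subtractf[symmetric] 
  by (rule sum.cong) (auto simp: algebra_simps)

lemma Om_sum1: "Om m (\<lambda>p. \<Sum>i\<in>I. f i p) z = (\<Sum>i\<in>I. Om m (f i) z)"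
  unfolding Om_def by (simp add: sum_distrib_right sum_subtractf[symmetric]) (rule sum.swap)

lemma Om_sum2: "Om m z (\<lambda>p. \<Sum>i\<in>I. f i p) = (\<Sum>i\<in>I. Om m z (f i))"
  unfolding Om_def by (simp add: sum_distrib_left sum_subtractf[symmetric]) (rule sum.swap)

lemma Om_scale1: "Om m (\<lambda>p. a * x p) z = a * Om m x z"
  using Om_lin1[of m a x 0 x z] by simp
lemma Om_scale2: "Om m z (\<lambda>p. a * x p) = a * Om m z x"
  using Om_lin2[of m z a x 0 x] by simp

lemma Om_zero1[simp]: "Om m (\<lambda>p. 0) z = 0" unfolding Om_def by simp
lemma Om_zero2[simp]: "Om m z (\<lambda>p. 0) = 0" unfolding Om_def by simp

lemma Om_ek2: "Om m x (ek j) = (if m \<le> j \<and> j < 2*m then x (j-m) else 0) - (if j < m then x (j+m) else 0)"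
proof -
  have "Om m x (ek j) = (\<Sum>q<m. (if q + m = j then x q else 0)) - (\<Sum>q<m. if q = j then x (q+m) else 0)"
    unfolding Om_def ek_def sum_subtractf[symmetric] by (intro sum.cong) auto
  also have "(\<Sum>q<m. (if q + m = j then x q else 0)) = (if m \<le> j \<and> j < 2*m then x (j-m) else 0)"
  proof (cases "m \<le> j \<and> j < 2*m")
    case True
    have "(\<Sum>q<m. (if q + m = j then x q else 0)) = (\<Sum>q<m. (if q = j - m then x q else 0))"
      using True by (intro sum.cong) auto
    moreover have "j - m < m" using True by linarith
    ultimately show ?thesis using True by (simp add: sum.delta)
  next
    case False
    thus ?thesis by (intro trans[OF sum.neutral]) auto
  qed
  also have "(\<Sum>q<m. if q = j then x (q+m) else 0) = (if j < m then x (j+m) else 0)"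
    by (simp add: sum.delta)
  finally show ?thesis .
qed

lemma Om_ek1: "Om m (ek j) x = (if j < m then x (j+m) else 0) - (if m \<le> j \<and> j < 2*m then x (j-m) else 0)"
  using Om_ek2[of m x j] Om_antisym[of m "ek j" x] by simp



definition mk :: "nat \<Rightarrow> vec \<Rightarrow> mtx \<Rightarrow> real \<Rightarrow> vec \<Rightarrow> real \<Rightarrow> mtx" where
  "mk m p B a r lam = (\<lambda>i j. if i = 0 then (if j = 0 then 1 else 0)
     else if i \<le> 2*m then (if j = 0 then p (i-1) else if j \<le> 2*m then B (i-1) (j-1) else 0)
     else if i = Suc (2*m) then (if j = 0 then a else if j \<le> 2*m then r (j-1)
                                else if j = Suc (2*m) then lam else 0)
     else 0)"

definition mkv :: "nat \<Rightarrow> real \<Rightarrow> vec \<Rightarrow> real \<Rightarrow> vec" where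
  "mkv m u0 x uw = (\<lambda>i. if i = 0 then u0 else if i \<le> 2*m then x (i-1) else if i = Suc (2*m) then uw else 0)"

lemma mk_00[simp]: "mk m p B a r lam 0 j = (if j = 0 then 1 else 0)" by (simp add: mk_def)
lemma mk_i0[simp]: "i < 2*m \<Longrightarrow> mk m p B a r lam (Suc i) 0 = p i" by (simp add: mk_def)
lemma mk_ij[simp]: "i < 2*m \<Longrightarrow> j < 2*m \<Longrightarrow> mk m p B a r lam (Suc i) (Suc j) = B i j" by (simp add: mk_def)
lemma mk_iw[simp]: "i < 2*m \<Longrightarrow> mk m p B a r lam (Suc i) (Suc (2*m)) = 0" by (simp add: mk_def)
lemma mk_w0[simp]: "mk m p B a r lam (Suc (2*m)) 0 = a" by (simp add: mk_def)
lemma mk_wj[simp]: "j < 2*m \<Longrightarrow> mk m p B a r lam (Suc (2*m)) (Suc j) = r j" by (simp add: mk_def)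
lemma mk_ww[simp]: "mk m p B a r lam (Suc (2*m)) (Suc (2*m)) = lam" by (simp add: mk_def)

lemma mkv_0[simp]: "mkv m u0 x uw 0 = u0" by (simp add: mkv_def)
lemma mkv_i[simp]: "i < 2*m \<Longrightarrow> mkv m u0 x uw (Suc i) = x i" by (simp add: mkv_def)
lemma mkv_w[simp]: "mkv m u0 x uw (Suc (2*m)) = uw" by (simp add: mkv_def)

lemma sumN: "(\<Sum>l<Suc (Suc (2*m)). f l) = f 0 + (\<Sum>l<2*m. f (Suc l)) + (f (Suc (2*m)) :: real)"
proof -
  have "(\<Sum>l<Suc (Suc (2*m)). f l) = (\<Sum>l<Suc (2*m). f l) + f (Suc (2*m))" by (rule sum.lessThan_Suc)
  also have "(\<Sum>l<Suc (2*m). f l) = f 0 + (\<Sum>l<2*m. f (Suc l))" by (rule sum.lessThan_Suc_shift)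
  finally show ?thesis .
qed

lemma mvec_split: "i < Suc (Suc (2*m)) \<Longrightarrow> mvec (Suc (Suc (2*m))) A v i =
   A i 0 * v 0 + (\<Sum>l<2*m. A i (Suc l) * v (Suc l)) + A i (Suc (2*m)) * v (Suc (2*m))"
  unfolding mvec_def using sumN[where m=m and f="\<lambda>l. A i l * v l"] by simp

lemma mk_Mats: "mk m p B a r lam \<in> Mats (Suc (Suc (2*m)))"
  by (auto simp: Mats_def mk_def)

lemma idx_cases:
  obtains "i = 0" | i' where "i = Suc i'" "i' < 2*m" | "i = Suc (2*m)" | "i \<ge> Suc (Suc (2*m))"
  by (metis Suc_le_eq less_Suc_eq not0_implies_Suc not_less_eq)

lemma mk_eqI:
  assumes "\<And>i. i < 2*m \<Longrightarrow> p i = p' i" "\<And>i j. i < 2*m \<Longrightarrow> j < 2*m \<Longrightarrow> B i j = B' i j"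
    "a = a'" "\<And>j. j < 2*m \<Longrightarrow> r j = r' j" "lam = lam'"
  shows "mk m p B a r lam = mk m p' B' a' r' lam'"
  using assms unfolding mk_def 
  by (intro ext) (auto simp: Suc_le_eq le_imp_diff_is_add)

lemma mkv_eqI:
  assumes "u0 = u0'" "\<And>i. i < 2*m \<Longrightarrow> x i = x' i" "uw = uw'"
  shows "mkv m u0 x uw = mkv m u0' x' uw'"
  using assms unfolding mkv_def by (intro ext) (auto simp: Suc_le_eq le_imp_diff_is_add)

lemma mkv_eqD:
  assumes "mkv m u0 x uw = mkv m u0' x' uw'"
  shows "u0 = u0'" "\<And>i. i < 2*m \<Longrightarrow> x i = x' i" "uw = uw'"
proof -
  show "u0 = u0'" using fun_cong[OF assms, of 0] by simp
  show "uw = uw'" using fun_cong[OF assms, of "Suc (2*m)"] by simp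
  fix i assume "i < 2*m" thus "x i = x' i" using fun_cong[OF assms, of "Suc i"] by simp
qed

definition tr :: "nat \<Rightarrow> vec \<Rightarrow> vec" where
  "tr m u = mkv m (u 0) (\<lambda>i. u (Suc i)) (u (Suc (2*m)))"

lemma tr_eq: "i < Suc (Suc (2*m)) \<Longrightarrow> tr m u i = u i"
  unfolding tr_def mkv_def by (auto simp: Suc_le_eq less_Suc_eq)

lemma mvec_tr: "mvec (Suc (Suc (2*m))) A (tr m u) = mvec (Suc (Suc (2*m))) A u"
  unfolding mvec_def by (auto intro!: ext sum.cong simp: tr_eq)

lemma mvec_mk:
  "mvec (Suc (Suc (2*m))) (mk m p B a r lam) (mkv m u0 x uw) =
   mkv m u0 (\<lambda>i. u0 * p i + mvec (2*m) B x i) (u0 * a + dot (2*m) r x + lam * uw)"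
proof (rule ext)
  fix i
  show "mvec (Suc (Suc (2*m))) (mk m p B a r lam) (mkv m u0 x uw) i =
   mkv m u0 (\<lambda>i. u0 * p i + mvec (2*m) B x i) (u0 * a + dot (2*m) r x + lam * uw) i"
  proof (cases i rule: idx_cases[where m=m])
    case 1
    have "(\<Sum>l<2*m. mk m p B a r lam 0 (Suc l) * mkv m u0 x uw (Suc l)) = 0" by simp
    thus ?thesis using 1 by (simp add: mvec_split)
  next
    case (2 i')
    have "(\<Sum>l<2*m. mk m p B a r lam (Suc i') (Suc l) * mkv m u0 x uw (Suc l)) = mvec (2*m) B x i'"
      using 2 unfolding mvec_def by (auto intro!: sum.cong)
    thus ?thesis using 2 by (simp add: mvec_split del: mk_ij)
  next
    case 3
    have "(\<Sum>l<2*m. mk m p B a r lam (Suc (2*m)) (Suc l) * mkv m u0 x uw (Suc l)) = dot (2*m) r x"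
      unfolding dot_def by (auto intro!: sum.cong)
    thus ?thesis using 3 by (simp add: mvec_split del: mk_wj)
  next
    case 4
    thus ?thesis by (simp add: mvec_def mkv_def)
  qed
qed



lemma col_mk0: "col (mk m p B a r lam) 0 = mkv m 1 p a"
  unfolding col_def mk_def mkv_def by (rule ext) auto
lemma col_mkj: "j < 2*m \<Longrightarrow> col (mk m p B a r lam) (Suc j) = mkv m 0 (col B j) (r j)"
  unfolding col_def mk_def mkv_def by (rule ext) auto
lemma col_mkw: "col (mk m p B a r lam) (Suc (2*m)) = mkv m 0 (\<lambda>_. 0) lam"
  unfolding col_def mk_def mkv_def by (rule ext) auto

lemma mmul_col: "mmul k A B i j = (if j < k then mvec k A (col B j) i else 0)"
  unfolding mmul_def mvec_def col_def by auto

lemma mvec_lin: "mvec k B (\<lambda>i. a * x i + b * y i) = (\<lambda>i. a * mvec k B x i + b * mvec k B y i)"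
  unfolding mvec_def by (auto simp: sum.distrib sum_distrib_left algebra_simps intro!: ext)

lemma mvec_zero[simp]: "mvec k B (\<lambda>_. 0) = (\<lambda>_. 0)"
  unfolding mvec_def by auto

lemma dot_zero[simp]: "dot k r (\<lambda>_. 0) = 0" unfolding dot_def by simp

lemma mmul_mk:
  "mmul (Suc (Suc (2*m))) (mk m p1 B1 a1 r1 l1) (mk m p2 B2 a2 r2 l2) =
   mk m (\<lambda>i. p1 i + mvec (2*m) B1 p2 i) (mmul (2*m) B1 B2) (a1 + dot (2*m) r1 p2 + l1 * a2)
      (\<lambda>j. dot (2*m) r1 (col B2 j) + l1 * r2 j) (l1 * l2)"
    (is "?L = ?R")
proof (intro ext)
  fix i j
  show "?L i j = ?R i j"
  proof (cases j rule: idx_cases[where m=m])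
    case 1
    have "?L i j = mkv m 1 (\<lambda>i. p1 i + mvec (2*m) B1 p2 i) (a1 + dot (2*m) r1 p2 + l1 * a2) i"
      using 1 by (simp add: mmul_col col_mk0 mvec_mk)
    also have "\<dots> = ?R i j" using 1 fun_cong[OF col_mk0, of m _ _ _ _ _ i] unfolding col_def by simp
    finally show ?thesis .
  next
    case (2 j')
    have "?L i j = mkv m 0 (\<lambda>i. mvec (2*m) B1 (col B2 j') i) (dot (2*m) r1 (col B2 j') + l1 * r2 j') i"
      using 2 by (simp add: mmul_col col_mkj mvec_mk)
    also have "\<dots> = mkv m 0 (col (mmul (2*m) B1 B2) j') (dot (2*m) r1 (col B2 j') + l1 * r2 j') i"
    proof -
      have "mkv m 0 (\<lambda>i. mvec (2*m) B1 (col B2 j') i) (dot (2*m) r1 (col B2 j') + l1 * r2 j')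
          = mkv m 0 (col (mmul (2*m) B1 B2) j') (dot (2*m) r1 (col B2 j') + l1 * r2 j')"
        using 2 by (intro mkv_eqI) (auto simp: mmul_col col_def)
      thus ?thesis by simp
    qed
    also have "\<dots> = ?R i j" using 2 fun_cong[OF col_mkj, of j' m _ _ _ _ _ i] unfolding col_def by simp
    finally show ?thesis .
  next
    case 3
    have "?L i j = mkv m 0 (\<lambda>_. 0) (l1 * l2) i"
      using 3 by (simp add: mmul_col col_mkw mvec_mk)
    also have "\<dots> = ?R i j" using 3 fun_cong[OF col_mkw, of m _ _ _ _ _ i] unfolding col_def by simp
    finally show ?thesis .
  next
    case 4 thus ?thesis unfolding mmul_def mk_def by simp
  qed
qed

lemma chbr_mkv:
  "chbr (Suc m) (mkv m u0 x uw) (mkv m v0 y vw) =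
   mkv m 0 (\<lambda>i. (u0 * y i - v0 * x i) / 2) (u0 * vw - v0 * uw - Om m x y)"
proof (intro ext)
  fix i
  have S: "(\<Sum>p\<in>{1..m}. mkv m u0 x uw (p + m) * mkv m v0 y vw p - mkv m v0 y vw (p + m) * mkv m u0 x uw p)
      = - Om m x y"
  proof -
    have "(\<Sum>p\<in>{1..m}. mkv m u0 x uw (p + m) * mkv m v0 y vw p - mkv m v0 y vw (p + m) * mkv m u0 x uw p)
       = (\<Sum>q<m. mkv m u0 x uw (Suc q + m) * mkv m v0 y vw (Suc q) - mkv m v0 y vw (Suc q + m) * mkv m u0 x uw (Suc q))"
      unfolding One_nat_def by (rule sum.atLeast1_atMost_eq)
    also have "\<dots> = (\<Sum>q<m. x (q+m) * y q - y (q+m) * x q)"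
      by (intro sum.cong) auto
    also have "\<dots> = - Om m x y" unfolding Om_def by (subst sum_negf[symmetric]) (rule sum.cong, auto simp: algebra_simps)
    finally show ?thesis .
  qed
  show "chbr (Suc m) (mkv m u0 x uw) (mkv m v0 y vw) i =
   mkv m 0 (\<lambda>i. (u0 * y i - v0 * x i) / 2) (u0 * vw - v0 * uw - Om m x y) i"
  proof (cases i rule: idx_cases[where m=m])
    case 1 thus ?thesis by (simp add: chbr_def)
  next
    case (2 i') thus ?thesis by (simp add: chbr_def)
  next
    case 3 thus ?thesis using S by (simp add: chbr_def)
  next
    case 4 thus ?thesis by (simp add: chbr_def mkv_def)
  qed
qed

lemma chbr_cong: 
  assumes "\<And>i. i < Suc (Suc (2*m)) \<Longrightarrow> u i = u' i" "\<And>i. i < Suc (Suc (2*m)) \<Longrightarrow> v i = v' i"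
  shows "chbr (Suc m) u v = chbr (Suc m) u' v'"
proof -
  have S: "(\<Sum>p\<in>{1..m}. u (p + m) * v p - v (p + m) * u p) = (\<Sum>p\<in>{1..m}. u' (p + m) * v' p - v' (p + m) * u' p)"
    using assms by (intro sum.cong) auto
  show ?thesis unfolding chbr_def using assms S by (intro ext) auto
qed

lemma chbr_tr: "chbr (Suc m) u v = chbr (Suc m) (tr m u) (tr m v)"
  by (rule chbr_cong) (auto simp: tr_eq)



definition supp :: "nat \<Rightarrow> vec \<Rightarrow> bool" where "supp k x \<longleftrightarrow> (\<forall>p\<ge>k. x p = 0)"

lemma Om_expand2: "Om m z x = (\<Sum>l<2*m. Om m z (ek l) * x l)"
proof -
  have "(\<Sum>l<2*m. Om m z (ek l) * x l) = 
     (\<Sum>q<m. Om m z (ek q) * x q) + (\<Sum>q<m. Om m z (ek (q+m)) * x (q+m))"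
    by (rule sum_split2)
  also have "(\<Sum>q<m. Om m z (ek q) * x q) = (\<Sum>q<m. - z (q+m) * x q)"
    by (intro sum.cong) (auto simp: Om_ek2)
  also have "(\<Sum>q<m. Om m z (ek (q+m)) * x (q+m)) = (\<Sum>q<m. z q * x (q+m))"
    by (intro sum.cong) (auto simp: Om_ek2)
  finally show ?thesis unfolding Om_def by (simp add: sum.distrib[symmetric] algebra_simps)
qed

lemma Om_bilin:
  "Om m (\<lambda>p. \<Sum>i\<in>I. x i * c i p) (\<lambda>p. \<Sum>j\<in>J. y j * d j p) = (\<Sum>i\<in>I. \<Sum>j\<in>J. x i * y j * Om m (c i) (d j))"
  by (simp add: Om_sum1 Om_sum2 Om_scale1 Om_scale2 sum_distrib_left mult.assoc)

lemma vec_expand: "p < 2*m \<Longrightarrow> (\<Sum>i<2*m. x i * ek i p) = x p"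
  unfolding ek_def by (simp add: if_distrib cong: if_cong)

definition SpS :: "nat \<Rightarrow> mtx set" where
  "SpS m = {M \<in> Mats (2*m). \<forall>i<2*m. \<forall>j<2*m. Om m (col M i) (col M j) = Om m (ek i) (ek j)}"

lemma Mats_zero: "M \<in> Mats k \<Longrightarrow> (k \<le> i \<or> k \<le> j) \<Longrightarrow> M i j = 0"
  unfolding Mats_def by auto

lemma Om_mvec:
  assumes "M \<in> SpS m"
  shows "Om m (mvec (2*m) M x) (mvec (2*m) M y) = Om m x y"
proof -
  have "Om m (mvec (2*m) M x) (mvec (2*m) M y) = Om m (\<lambda>p. \<Sum>i<2*m. x i * col M i p) (\<lambda>p. \<Sum>j<2*m. y j * col M j p)"
    by (rule Om_cong) (auto simp: mvec_def col_def mult.commute)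
  also have "\<dots> = (\<Sum>i<2*m. \<Sum>j<2*m. x i * y j * Om m (col M i) (col M j))" by (rule Om_bilin)
  also have "\<dots> = (\<Sum>i<2*m. \<Sum>j<2*m. x i * y j * Om m (ek i) (ek j))"
    using assms unfolding SpS_def by (intro sum.cong) auto
  also have "\<dots> = Om m (\<lambda>p. \<Sum>i<2*m. x i * ek i p) (\<lambda>p. \<Sum>j<2*m. y j * ek j p)" by (rule Om_bilin[symmetric])
  also have "\<dots> = Om m x y" by (rule Om_cong) (auto simp: vec_expand)
  finally show ?thesis .
qed

lemma Jmat_Om: "i < 2*m \<Longrightarrow> j < 2*m \<Longrightarrow> Jmat m i j = Om m (ek i) (ek j)"
  unfolding Jmat_def by (simp add: Om_ek2) (auto simp: ek_def)

lemma Jmat_Mats: "Jmat m \<in> Mats (2*m)"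
  unfolding Mats_def Jmat_def by auto

lemma Sp_conv:
  assumes "M \<in> Mats (2*m)"
  shows "mmul (2*m) (mmul (2*m) (mtrans M) (Jmat m)) M = Jmat m \<longleftrightarrow> M \<in> SpS m"
proof -
  have key: "mmul (2*m) (mmul (2*m) (mtrans M) (Jmat m)) M i j = Om m (col M i) (col M j)"
    if "i < 2*m" "j < 2*m" for i j
  proof -
    have "\<And>l. l < 2*m \<Longrightarrow> (\<Sum>l'<2*m. mtrans M i l' * Jmat m l' l) = Om m (col M i) (ek l)"
    proof -
      fix l assume l: "l < 2*m"
      have "(\<Sum>l'<2*m. mtrans M i l' * Jmat m l' l) = (\<Sum>l'<2*m. col M i l' * Om m (ek l') (ek l))"
        by (intro sum.cong) (auto simp: Jmat_Om l mtrans_def col_def)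
      also have "(\<Sum>l'<2*m. col M i l' * Om m (ek l') (ek l)) = - (\<Sum>l'<2*m. Om m (ek l) (ek l') * col M i l')"
        by (subst sum_negf[symmetric]) (intro sum.cong, auto simp: Om_antisym[of m "ek l"])
      also have "\<dots> = - Om m (ek l) (col M i)" by (simp only: Om_expand2[of m "ek l" "col M i"])
      also have "\<dots> = Om m (col M i) (ek l)" using Om_antisym[of m "col M i" "ek l"] by simp
      finally show "(\<Sum>l'<2*m. mtrans M i l' * Jmat m l' l) = Om m (col M i) (ek l)" by simp
    qed
    hence "mmul (2*m) (mmul (2*m) (mtrans M) (Jmat m)) M i j = (\<Sum>l<2*m. Om m (col M i) (ek l) * col M j l)"
      using that unfolding mmul_def by (auto simp: col_def intro!: sum.cong)
    also have "\<dots> = Om m (col M i) (col M j)" by (simp add: Om_expand2[symmetric])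
    finally show ?thesis .
  qed
  show ?thesis
  proof
    assume H: "mmul (2*m) (mmul (2*m) (mtrans M) (Jmat m)) M = Jmat m"
    show "M \<in> SpS m" unfolding SpS_def using assms key H Jmat_Om by auto
  next
    assume H: "M \<in> SpS m"
    show "mmul (2*m) (mmul (2*m) (mtrans M) (Jmat m)) M = Jmat m"
    proof (intro ext)
      fix i j
      show "mmul (2*m) (mmul (2*m) (mtrans M) (Jmat m)) M i j = Jmat m i j"
      proof (cases "i < 2*m \<and> j < 2*m")
        case True thus ?thesis using key H Jmat_Om unfolding SpS_def by auto
      next
        case False thus ?thesis using Mats_zero[OF Jmat_Mats] by (auto simp: mmul_def)
      qed
    qed
  qed
qed

lemma Jv_expl: "mvec (2*m) (Jmat m) v i = (if i < m then v (i+m) else if i < 2*m then - v (i-m) else 0)"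
proof (cases "i < 2*m")
  case True
  have "mvec (2*m) (Jmat m) v i = (\<Sum>l<2*m. Om m (ek i) (ek l) * v l)"
    using True unfolding mvec_def by (auto simp: Jmat_Om intro!: sum.cong)
  also have "\<dots> = Om m (ek i) v" by (simp add: Om_expand2[symmetric])
  finally show ?thesis using True by (simp add: Om_ek1)
qed (simp add: mvec_def)

lemma Om_J: "Om m (mvec (2*m) (Jmat m) v) y = dot (2*m) v y"
  unfolding Om_def dot_def sum_split2 Jv_expl by (simp add: sum.distrib[symmetric] algebra_simps)

lemma JJ: "i < 2*m \<Longrightarrow> mvec (2*m) (Jmat m) (mvec (2*m) (Jmat m) w) i = - w i"
  unfolding Jv_expl by auto



definition tvv :: "nat \<Rightarrow> vec \<Rightarrow> real \<Rightarrow> vec \<Rightarrow> vec" where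
  "tvv m u c x = (\<lambda>p. x p + c * Om m u x * u p)"
definition tv :: "nat \<Rightarrow> vec \<Rightarrow> real \<Rightarrow> mtx \<Rightarrow> mtx" where
  "tv m u c M = (\<lambda>i j. M i j + c * Om m u (col M j) * u i)"

inductive_set Tr :: "nat \<Rightarrow> mtx set" for m where
  Tr_id: "mid (2*m) \<in> Tr m"
| Tr_tv: "M \<in> Tr m \<Longrightarrow> supp (2*m) u \<Longrightarrow> tv m u c M \<in> Tr m"

lemma Om_diff1: "Om m (\<lambda>p. y p - x p) z = Om m y z - Om m x z"
  using Om_lin1[of m 1 y "-1" x z] by simp
lemma Om_add2: "Om m z (\<lambda>p. x p + y p) = Om m z x + Om m z y"
  using Om_lin2[of m z 1 x 1 y] by simp
lemma Om_add1: "Om m (\<lambda>p. x p + y p) z = Om m x z + Om m y z"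
  using Om_lin1[of m 1 x 1 y z] by simp

lemma col_tv: "col (tv m u c M) j = tvv m u c (col M j)"
  unfolding col_def tv_def tvv_def by simp

lemma Om_tvv1: "Om m u (tvv m u c x) = Om m u x"
  unfolding tvv_def using Om_lin2[of m u 1 x "c * Om m u x" u] by simp

lemma Om_tvv: "Om m (tvv m u c x) (tvv m u c y) = Om m x y"
proof -
  have "Om m (tvv m u c x) (tvv m u c y) = Om m (\<lambda>p. 1 * x p + (c * Om m u x) * u p) (\<lambda>p. 1 * y p + (c * Om m u y) * u p)"
    unfolding tvv_def by simp
  also have "\<dots> = Om m x y + c * Om m u y * Om m x u + c * Om m u x * Om m u y"
    by (simp only: Om_lin1 Om_lin2) (simp add: algebra_simps)
  also have "\<dots> = Om m x y" using Om_antisym[of m x u] by (simp add: algebra_simps)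
  finally show ?thesis .
qed

lemma tvv_inv: "tvv m u (-c) (tvv m u c x) = x"
  using Om_tvv1[of m u c x] unfolding tvv_def by (auto simp: algebra_simps)

lemma tv_inv: "tv m u (-c) (tv m u c M) = M"
proof (intro ext)
  fix i j
  have "col (tv m u (-c) (tv m u c M)) j = col M j" by (simp add: col_tv tvv_inv)
  thus "tv m u (-c) (tv m u c M) i j = M i j" unfolding col_def by meson
qed

lemma col_Mats: "M \<in> Mats k \<Longrightarrow> k \<le> j \<Longrightarrow> col M j = (\<lambda>_. 0)"
  unfolding col_def Mats_def by auto

lemma tv_Mats: "M \<in> Mats (2*m) \<Longrightarrow> supp (2*m) u \<Longrightarrow> tv m u c M \<in> Mats (2*m)"
  unfolding Mats_def supp_def tv_def
  by (auto simp: col_Mats[unfolded Mats_def] Mats_def)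

lemma tv_SpS: "M \<in> SpS m \<Longrightarrow> supp (2*m) u \<Longrightarrow> tv m u c M \<in> SpS m"
  unfolding SpS_def by (auto simp: tv_Mats col_tv Om_tvv)

lemma Tr_back: "supp (2*m) u \<Longrightarrow> tv m u c M \<in> Tr m \<Longrightarrow> M \<in> Tr m"
  using Tr_tv[of "tv m u c M" m u "-c"] by (simp add: tv_inv)

lemma col_mid: "col (mid (2*m)) i = (if i < 2*m then ek i else (\<lambda>_. 0))"
  unfolding col_def mid_def ek_def by auto

lemma mid_SpS: "mid (2*m) \<in> SpS m"
proof -
  have "mid (2*m) \<in> Mats (2*m)" by (auto simp: Mats_def mid_def)
  thus ?thesis unfolding SpS_def by (auto simp: col_mid)
qed

lemma Tr_SpS: "M \<in> Tr m \<Longrightarrow> M \<in> SpS m"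
  by (induction rule: Tr.induct) (auto simp: mid_SpS tv_SpS)

definition good :: "nat \<Rightarrow> nat \<Rightarrow> vec \<Rightarrow> bool" where
  "good m k x \<longleftrightarrow> supp (2*m) x \<and> (\<forall>q<k. x q = 0 \<and> x (q+m) = 0)"
definition Fk :: "nat \<Rightarrow> nat \<Rightarrow> mtx \<Rightarrow> bool" where
  "Fk m k M \<longleftrightarrow> (\<forall>q<k. col M q = ek q \<and> col M (q+m) = ek (q+m))"

lemma Om_good_ek:
  assumes "good m k u" "q < k" "k \<le> m"
  shows "Om m u (ek q) = 0" "Om m u (ek (q+m)) = 0"
  using assms unfolding good_def by (auto simp: Om_ek2)

lemma good_diff: "good m k x \<Longrightarrow> good m k y \<Longrightarrow> good m k (\<lambda>p. y p - x p)"
  unfolding good_def supp_def by auto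

lemma move:
  assumes M: "M \<in> SpS m" "Fk m k M" "k \<le> m" and gx: "good m k x" and gy: "good m k y"
    and cj: "col M j = x" and nz: "Om m x y \<noteq> 0"
  obtains M' where "M' \<in> SpS m" "Fk m k M'" "col M' j = y"
    "\<And>j'. Om m (\<lambda>p. y p - x p) (col M j') = 0 \<Longrightarrow> col M' j' = col M j'"
    "M' \<in> Tr m \<Longrightarrow> M \<in> Tr m"
proof -
  define u where "u = (\<lambda>p. y p - x p)"
  have gu: "good m k u" unfolding u_def by (rule good_diff[OF gx gy])
  hence su: "supp (2*m) u" unfolding good_def by simp
  have Oux: "Om m u x = - Om m x y" unfolding u_def Om_diff1 using Om_antisym[of m y x] by simp
  define c where "c = 1 / Om m u x"
  have cu: "c * Om m u x = 1" unfolding c_def using Oux nz by simp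
  define M' where "M' = tv m u c M"
  show ?thesis
  proof (rule that)
    show "M' \<in> SpS m" unfolding M'_def by (rule tv_SpS[OF M(1) su])
    show "Fk m k M'" unfolding Fk_def M'_def col_tv
    proof (intro allI impI conjI)
      fix q assume q: "q < k"
      have "col M q = ek q" "col M (q+m) = ek (q+m)" using M(2) q unfolding Fk_def by auto
      thus "tvv m u c (col M q) = ek q" "tvv m u c (col M (q+m)) = ek (q+m)"
        using Om_good_ek[OF gu q M(3)] unfolding tvv_def by auto
    qed
    show "col M' j = y" unfolding M'_def col_tv cj tvv_def using cu by (auto simp: u_def)
    show "col M' j' = col M j'" if "Om m (\<lambda>p. y p - x p) (col M j') = 0" for j'
      using that unfolding M'_def col_tv tvv_def u_def by simp
    show "M \<in> Tr m" if "M' \<in> Tr m" using Tr_back[OF su] that unfolding M'_def by blast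
  qed
qed



lemma good_add: "good m k x \<Longrightarrow> good m k y \<Longrightarrow> good m k (\<lambda>p. x p + y p)"
  unfolding good_def supp_def by auto

lemma good_ek: "i < 2*m \<Longrightarrow> \<not> i < k \<Longrightarrow> \<not> (m \<le> i \<and> i < m + k) \<Longrightarrow> good m k (ek i)"
  unfolding good_def supp_def ek_def by auto

lemma goodcol:
  assumes M: "M \<in> SpS m" "Fk m k M" "k \<le> m" and j: "j < 2*m" "\<not> j < k" "\<not> (m \<le> j \<and> j < m + k)"
  shows "good m k (col M j)"
  unfolding good_def
proof (intro conjI allI impI)
  show "supp (2*m) (col M j)" using M(1) unfolding SpS_def supp_def Mats_def col_def by auto
  fix q assume q: "q < k"
  have c: "col M q = ek q" "col M (q+m) = ek (q+m)" using M(2) q unfolding Fk_def by auto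
  have qm: "q < m" "q+m < 2*m" using q M(3) by auto
  have "Om m (col M j) (col M q) = Om m (ek j) (ek q)" using M(1) j qm unfolding SpS_def by auto
  thus "col M j (q+m) = 0" using c qm j q by (simp add: Om_ek2) (auto simp: ek_def)
  have "Om m (col M j) (col M (q+m)) = Om m (ek j) (ek (q+m))" using M(1) j qm unfolding SpS_def by auto
  thus "col M j q = 0" using c qm j q by (simp add: Om_ek2) (auto simp: ek_def)
qed

lemma partner:
  assumes g: "good m k x" "k \<le> m" and p: "p < 2*m" "x p \<noteq> 0"
  shows "\<exists>a. good m k a \<and> Om m x a \<noteq> 0"
proof (cases "p < m")
  case True
  have "good m k (ek (p+m))" unfolding good_def supp_def ek_def using g p True
    by (auto simp: good_def)
  moreover have "Om m x (ek (p+m)) = x p" using True by (simp add: Om_ek2)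
  ultimately show ?thesis using p by auto
next
  case False
  have "good m k (ek (p-m))" unfolding good_def supp_def ek_def using g p False
    by (auto simp: good_def)
  moreover have "Om m x (ek (p-m)) = - x p" using False p by (simp add: Om_ek2)
  ultimately show ?thesis using p by auto
qed

lemma nonzero_of_Om: "Om m x y \<noteq> 0 \<Longrightarrow> \<exists>p<2*m. x p \<noteq> 0"
proof (rule ccontr)
  assume "Om m x y \<noteq> 0" "\<not> (\<exists>p<2*m. x p \<noteq> 0)"
  hence "Om m x y = Om m (\<lambda>_. 0) y" by (intro Om_cong) auto
  thus False using \<open>Om m x y \<noteq> 0\<close> by simp
qed

lemma choose_z:
  assumes "good m k x" "good m k y" "k \<le> m" "\<exists>p<2*m. x p \<noteq> 0" "\<exists>p<2*m. y p \<noteq> 0"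
  shows "\<exists>z. good m k z \<and> Om m x z \<noteq> 0 \<and> Om m z y \<noteq> 0"
proof -
  obtain a where a: "good m k a" "Om m x a \<noteq> 0" using partner assms by blast
  obtain b where b: "good m k b" "Om m y b \<noteq> 0" using partner assms by blast
  show ?thesis
  proof (cases "Om m a y \<noteq> 0")
    case True thus ?thesis using a by blast
  next
    case F1: False
    show ?thesis
    proof (cases "Om m x b \<noteq> 0")
      case True thus ?thesis using b Om_antisym[of m b y] by auto
    next
      case False
      have "good m k (\<lambda>p. a p + b p)" by (rule good_add[OF a(1) b(1)])
      moreover have "Om m x (\<lambda>p. a p + b p) \<noteq> 0" using a False by (simp add: Om_add2)
      moreover have "Om m (\<lambda>p. a p + b p) y \<noteq> 0" using F1 b Om_antisym[of m b y] by (simp add: Om_add1)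
      ultimately show ?thesis by blast
    qed
  qed
qed

lemma Om_ek_pair: "k < m \<Longrightarrow> Om m (ek k) (ek (k+m)) = 1"
  by (simp add: Om_ek2) (simp add: ek_def)

lemma step1:
  assumes M: "M \<in> SpS m" "Fk m k M" "k < m"
  shows "\<exists>M'. M' \<in> SpS m \<and> Fk m k M' \<and> col M' k = ek k \<and> (M' \<in> Tr m \<longrightarrow> M \<in> Tr m)"
proof -
  have km: "k \<le> m" using M by simp
  define x where "x = col M k"
  have gx: "good m k x" unfolding x_def using M by (intro goodcol) auto
  have gy: "good m k (ek k)" using M by (intro good_ek) auto
  have "Om m x (col M (k+m)) = Om m (ek k) (ek (k+m))" using M(1) M(3) unfolding SpS_def x_def by auto
  hence "Om m x (col M (k+m)) \<noteq> 0" using Om_ek_pair[OF M(3)] by simp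
  hence nx: "\<exists>p<2*m. x p \<noteq> 0" by (rule nonzero_of_Om)
  have ny: "\<exists>p<2*m. ek k p \<noteq> 0" using M(3) by (auto simp: ek_def)
  show ?thesis
  proof (cases "Om m x (ek k) \<noteq> 0")
    case True
    obtain M' where "M' \<in> SpS m" "Fk m k M'" "col M' k = ek k" "M' \<in> Tr m \<Longrightarrow> M \<in> Tr m"
      using move[OF M(1,2) km gx gy x_def[symmetric] True] by blast
    thus ?thesis by blast
  next
    case False
    obtain z where z: "good m k z" "Om m x z \<noteq> 0" "Om m z (ek k) \<noteq> 0"
      using choose_z[OF gx gy km nx ny] by blast
    obtain M1 where M1: "M1 \<in> SpS m" "Fk m k M1" "col M1 k = z" "M1 \<in> Tr m \<Longrightarrow> M \<in> Tr m"
      using move[OF M(1,2) km gx z(1) x_def[symmetric] z(2)] by blast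
    obtain M' where "M' \<in> SpS m" "Fk m k M'" "col M' k = ek k" "M' \<in> Tr m \<Longrightarrow> M1 \<in> Tr m"
      using move[OF M1(1,2) km z(1) gy M1(3) z(3)] by blast
    thus ?thesis using M1 by blast
  qed
qed

lemma step2:
  assumes M: "M \<in> SpS m" "Fk m k M" "k < m" "col M k = ek k"
  shows "\<exists>M'. M' \<in> SpS m \<and> Fk m (Suc k) M' \<and> (M' \<in> Tr m \<longrightarrow> M \<in> Tr m)"
proof -
  have km: "k \<le> m" using M by simp
  define y where "y = col M (k+m)"
  have gy: "good m k y" unfolding y_def using M by (intro goodcol) auto
  have gt: "good m k (ek (k+m))" using M by (intro good_ek) auto
  have "Om m (col M k) y = Om m (ek k) (ek (k+m))" using M(1) M(3) unfolding SpS_def y_def by auto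
  hence yk: "y (k+m) = 1" using Om_ek_pair[OF M(3)] M(3,4) by (simp add: Om_ek1)
  have fin: "Fk m (Suc k) M'" if "Fk m k M'" "col M' k = ek k" "col M' (k+m) = ek (k+m)" for M'
    using that unfolding Fk_def by (auto simp: less_Suc_eq)
  have pres: "Om m (\<lambda>p. t p - s p) (ek k) = 0" if "t (k+m) = s (k+m)" for t s
    using that M(3) by (simp add: Om_ek2)
  show ?thesis
  proof (cases "y k \<noteq> 0")
    case True
    have "Om m y (ek (k+m)) \<noteq> 0" using True M(3) by (simp add: Om_ek2)
    then obtain M' where M': "M' \<in> SpS m" "Fk m k M'" "col M' (k+m) = ek (k+m)"
      "\<And>j'. Om m (\<lambda>p. ek (k+m) p - y p) (col M j') = 0 \<Longrightarrow> col M' j' = col M j'"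
      "M' \<in> Tr m \<Longrightarrow> M \<in> Tr m"
      using move[OF M(1,2) km gy gt y_def[symmetric]] by blast
    have "col M' k = ek k" using M'(4)[of k] pres[of "ek (k+m)" y] yk M(4) by (simp add: ek_def)
    thus ?thesis using fin M' by blast
  next
    case False
    define z where "z = (\<lambda>p. ek k p + ek (k+m) p)"
    have gz: "good m k z" unfolding z_def using M by (intro good_add good_ek) auto
    have zk: "z (k+m) = 1" "z k = 1" unfolding z_def using M(3) by (auto simp: ek_def)
    have "Om m y z = - y (k+m) + y k" unfolding z_def Om_add2 using M(3) by (simp add: Om_ek2)
    hence "Om m y z \<noteq> 0" using yk False by simp
    then obtain M1 where M1: "M1 \<in> SpS m" "Fk m k M1" "col M1 (k+m) = z"
      "\<And>j'. Om m (\<lambda>p. z p - y p) (col M j') = 0 \<Longrightarrow> col M1 j' = col M j'"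
      "M1 \<in> Tr m \<Longrightarrow> M \<in> Tr m"
      using move[OF M(1,2) km gy gz y_def[symmetric]] by blast
    have c1: "col M1 k = ek k" using M1(4)[of k] pres[of z y] yk zk M(4) by simp
    have "Om m z (ek (k+m)) \<noteq> 0" using zk M(3) by (simp add: Om_ek2)
    then obtain M' where M': "M' \<in> SpS m" "Fk m k M'" "col M' (k+m) = ek (k+m)"
      "\<And>j'. Om m (\<lambda>p. ek (k+m) p - z p) (col M1 j') = 0 \<Longrightarrow> col M' j' = col M1 j'"
      "M' \<in> Tr m \<Longrightarrow> M1 \<in> Tr m"
      using move[OF M1(1,2) km gz gt M1(3)] by blast
    have "col M' k = ek k" using M'(4)[of k] pres[of "ek (k+m)" z] zk c1 by (simp add: ek_def)
    thus ?thesis using fin M' M1 by blast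
  qed
qed

lemma Fk_full: assumes "M \<in> Mats (2*m)" "Fk m m M" shows "M = mid (2*m)"
proof (intro ext)
  fix i j
  show "M i j = mid (2*m) i j"
  proof (cases "j < 2*m")
    case True
    have "col M j = ek j"
    proof (cases "j < m")
      case True thus ?thesis using assms(2) unfolding Fk_def by auto
    next
      case False
      hence "j - m < m" "j - m + m = j" using \<open>j < 2*m\<close> by auto
      thus ?thesis using assms(2) unfolding Fk_def by metis
    qed
    hence "M i j = ek j i" unfolding col_def using fun_cong by metis
    thus ?thesis using True assms(1) unfolding mid_def ek_def Mats_def by auto
  next
    case False thus ?thesis using assms(1) unfolding mid_def Mats_def by auto
  qed
qed

lemma SpS_Tr_aux: "m - k = d \<Longrightarrow> k \<le> m \<Longrightarrow> M \<in> SpS m \<Longrightarrow> Fk m k M \<Longrightarrow> M \<in> Tr m"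
proof (induction d arbitrary: k M)
  case 0
  hence "k = m" by simp
  hence "M = mid (2*m)" using Fk_full 0 unfolding SpS_def by auto
  thus ?case by (simp add: Tr_id)
next
  case (Suc d)
  hence km: "k < m" by simp
  obtain M1 where M1: "M1 \<in> SpS m" "Fk m k M1" "col M1 k = ek k" "M1 \<in> Tr m \<longrightarrow> M \<in> Tr m"
    using step1[OF Suc.prems(3,4) km] by blast
  obtain M2 where M2: "M2 \<in> SpS m" "Fk m (Suc k) M2" "M2 \<in> Tr m \<longrightarrow> M1 \<in> Tr m"
    using step2[OF M1(1,2) km M1(3)] by blast
  have "M2 \<in> Tr m" using Suc.IH[of "Suc k" M2] Suc.prems M2 km by auto
  thus ?case using M1 M2 by blast
qed

lemma SpS_Tr: "M \<in> SpS m \<Longrightarrow> M \<in> Tr m"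
  using SpS_Tr_aux[of m 0 m M] by (simp add: Fk_def)



lemma mmul_assoc: "mmul k (mmul k A B) C = mmul k A (mmul k B C)"
proof (intro ext)
  fix i j
  show "mmul k (mmul k A B) C i j = mmul k A (mmul k B C) i j"
  proof (cases "i < k \<and> j < k")
    case True
    have "(\<Sum>l<k. (\<Sum>l'<k. A i l' * B l' l) * C l j) = (\<Sum>l'<k. A i l' * (\<Sum>l<k. B l' l * C l j))"
      by (simp add: sum_distrib_left sum_distrib_right mult.assoc) (rule sum.swap)
    thus ?thesis using True unfolding mmul_def by (auto intro!: sum.cong)
  qed (auto simp: mmul_def)
qed

lemma mmul_Mats: "mmul k A B \<in> Mats k" unfolding mmul_def Mats_def by auto
lemma mid_Mats: "mid k \<in> Mats k" unfolding mid_def Mats_def by auto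

lemma mmul_mid_left: assumes "A \<in> Mats k" shows "mmul k (mid k) A = A"
proof (intro ext)
  fix i j
  show "mmul k (mid k) A i j = A i j"
  proof (cases "i < k \<and> j < k")
    case True
    have "(\<Sum>l<k. mid k i l * A l j) = (\<Sum>l<k. if l = i then A l j else 0)"
      by (intro sum.cong) (auto simp: mid_def)
    thus ?thesis using True by (simp add: mmul_def)
  qed (use assms in \<open>auto simp: mmul_def Mats_def\<close>)
qed
lemma mmul_mid_right: assumes "A \<in> Mats k" shows "mmul k A (mid k) = A"
proof (intro ext)
  fix i j
  show "mmul k A (mid k) i j = A i j"
  proof (cases "i < k \<and> j < k")
    case True
    have "(\<Sum>l<k. A i l * mid k l j) = (\<Sum>l<k. if l = j then A i l else 0)"
      by (intro sum.cong) (auto simp: mid_def)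
    thus ?thesis using True by (simp add: mmul_def)
  qed (use assms in \<open>auto simp: mmul_def Mats_def\<close>)
qed

lemma mvec_mmul: "mvec k (mmul k A B) u = mvec k A (mvec k B u)"
proof (intro ext)
  fix i
  show "mvec k (mmul k A B) u i = mvec k A (mvec k B u) i"
  proof (cases "i < k")
    case True
    have "(\<Sum>l<k. (\<Sum>l'<k. A i l' * B l' l) * u l) = (\<Sum>l'<k. A i l' * (\<Sum>l<k. B l' l * u l))"
      by (simp add: sum_distrib_left sum_distrib_right mult.assoc) (rule sum.swap)
    thus ?thesis using True unfolding mmul_def mvec_def by (auto intro!: sum.cong)
  qed (auto simp: mvec_def)
qed

lemma mvec_mid: "mvec k (mid k) u = (\<lambda>i. if i < k then u i else 0)"
proof (intro ext)
  fix i
  have "i < k \<Longrightarrow> (\<Sum>l<k. mid k i l * u l) = (\<Sum>l<k. if l = i then u l else 0)"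
    by (intro sum.cong) (auto simp: mid_def)
  thus "mvec k (mid k) u i = (if i < k then u i else 0)" by (simp add: mvec_def)
qed

lemma invertible_mul:
  assumes "invertible_mtx k A" "invertible_mtx k B" "A \<in> Mats k" "B \<in> Mats k"
  shows "invertible_mtx k (mmul k A B)"
proof -
  obtain A' where A': "A' \<in> Mats k" "mmul k A A' = mid k" "mmul k A' A = mid k"
    using assms(1) unfolding invertible_mtx_def by blast
  obtain B' where B': "B' \<in> Mats k" "mmul k B B' = mid k" "mmul k B' B = mid k"
    using assms(2) unfolding invertible_mtx_def by blast
  have "mmul k (mmul k A B) (mmul k B' A') = mid k"
    by (metis A'(1,2) B'(2) mmul_assoc mmul_mid_left)
  moreover have "mmul k (mmul k B' A') (mmul k A B) = mid k"
    by (metis A'(3) B'(3) assms(4) mmul_assoc mmul_mid_left)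
  ultimately show ?thesis unfolding invertible_mtx_def using mmul_Mats by blast
qed

lemma col_mid_ek: "l < K \<Longrightarrow> col (mid K) l = ek l" unfolding col_def mid_def ek_def by auto

lemma mid_eq: "mid k i l = (if i < k \<and> i = l then 1 else 0)" by (simp add: mid_def)

lemma tv_mmul:
  assumes "M \<in> Mats (2*m)" "supp (2*m) u"
  shows "tv m u c M = mmul (2*m) (tv m u c (mid (2*m))) M"
proof (intro ext)
  fix i j
  show "tv m u c M i j = mmul (2*m) (tv m u c (mid (2*m))) M i j"
  proof (cases "i < 2*m \<and> j < 2*m")
    case True
    have e: "Om m u (col M j) = (\<Sum>l<2*m. Om m u (ek l) * M l j)"
      by (subst Om_expand2) (simp add: col_def)
    have "mmul (2*m) (tv m u c (mid (2*m))) M i j = (\<Sum>l<2*m. (if l = i then M l j else 0) + c * u i * (Om m u (ek l) * M l j))"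
      using True unfolding mmul_def tv_def by (intro trans[OF if_P sum.cong]) (auto simp: col_mid_ek algebra_simps mid_eq)
    also have "\<dots> = M i j + c * u i * Om m u (col M j)"
      using True by (simp only: sum.distrib sum_distrib_left[symmetric] e) simp
    finally show ?thesis unfolding tv_def by simp
  next
    case False
    show ?thesis
    proof (cases "i < 2*m")
      case True
      hence "2*m \<le> j" using False by simp
      hence "col M j = (\<lambda>_. 0)" using assms(1) by (rule col_Mats[rotated])
      thus ?thesis using assms(1) \<open>2*m \<le> j\<close> unfolding tv_def mmul_def by (auto simp: Mats_def)
    next
      case False
      thus ?thesis using assms unfolding tv_def mmul_def supp_def Mats_def by auto
    qed
  qed
qed

lemma Tr_inv: "M \<in> Tr m \<Longrightarrow> invertible_mtx (2*m) M"
proof (induction rule: Tr.induct)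
  case Tr_id
  show ?case unfolding invertible_mtx_def using mid_Mats mmul_mid_left[OF mid_Mats] by blast
next
  case (Tr_tv M u c)
  have MM: "M \<in> Mats (2*m)" using Tr_SpS[OF Tr_tv.hyps(1)] unfolding SpS_def by simp
  define T where "T = tv m u c (mid (2*m))"
  define T' where "T' = tv m u (-c) (mid (2*m))"
  have TM: "T \<in> Mats (2*m)" "T' \<in> Mats (2*m)" unfolding T_def T'_def using tv_Mats mid_Mats Tr_tv by auto
  have "mmul (2*m) T T' = tv m u c T'" using tv_mmul[OF TM(2) Tr_tv.hyps(2)] unfolding T_def by simp
  also have "\<dots> = mid (2*m)" unfolding T'_def using tv_inv[of m u "-c"] by simp
  finally have 1: "mmul (2*m) T T' = mid (2*m)" .
  have "mmul (2*m) T' T = tv m u (-c) T" using tv_mmul[OF TM(1) Tr_tv.hyps(2)] unfolding T'_def by simp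
  also have "\<dots> = mid (2*m)" unfolding T_def using tv_inv[of m u c] by simp
  finally have 2: "mmul (2*m) T' T = mid (2*m)" .
  have "invertible_mtx (2*m) T" unfolding invertible_mtx_def using 1 2 TM by blast
  hence "invertible_mtx (2*m) (mmul (2*m) T M)" using invertible_mul TM MM Tr_tv.IH by blast
  thus ?case using tv_mmul[OF MM Tr_tv.hyps(2)] unfolding T_def by simp
qed



abbreviation Jv :: "nat \<Rightarrow> vec \<Rightarrow> vec" where "Jv m v \<equiv> mvec (2*m) (Jmat m) v"

definition dm :: "nat \<Rightarrow> real \<Rightarrow> mtx" where
  "dm m \<alpha> = mk m (\<lambda>_. 0) (\<lambda>i j. \<alpha> * mid (2*m) i j) 0 (\<lambda>_. 0) (\<alpha>^2)"
definition sm :: "nat \<Rightarrow> mtx \<Rightarrow> mtx" where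
  "sm m M = mk m (\<lambda>_. 0) M 0 (\<lambda>_. 0) 1"
definition tm :: "nat \<Rightarrow> real \<Rightarrow> vec \<Rightarrow> mtx" where
  "tm m a v = mk m (\<lambda>i. Jv m v i / 2) (mid (2*m)) a v 1"
definition Gp :: "nat \<Rightarrow> real \<Rightarrow> mtx \<Rightarrow> real \<Rightarrow> vec \<Rightarrow> mtx" where
  "Gp m \<alpha> M a v = mk m (\<lambda>i. \<alpha> * mvec (2*m) M (Jv m v) i / 2) (\<lambda>i j. \<alpha> * M i j) (\<alpha>^2 * a)
      (\<lambda>j. \<alpha>^2 * v j) (\<alpha>^2)"

lemma N_eq: "2 * Suc m = Suc (Suc (2*m))" by simp

lemma Dgrp_eq: "Dgrp (Suc m) = {dm m \<alpha> | \<alpha>. \<alpha> > 0}"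
proof -
  have "(\<lambda>i j. if i = 0 \<and> j = 0 then 1
                    else if 1 \<le> i \<and> i \<le> 2*Suc m-2 \<and> i = j then \<alpha>
                    else if i = 2*Suc m-1 \<and> j = 2*Suc m-1 then \<alpha>^2 else 0) = dm m \<alpha>" for \<alpha>::real
    unfolding dm_def mk_def mid_def by (intro ext) auto
  thus ?thesis unfolding Dgrp_def by auto
qed

lemma Spgrp_eq: "Spgrp (Suc m) = {sm m M | M. M \<in> SpS m}"
proof -
  have "(\<lambda>i j. if i = 0 \<and> j = 0 then 1
                    else if 1 \<le> i \<and> i \<le> 2*Suc m-2 \<and> 1 \<le> j \<and> j \<le> 2*Suc m-2 then M (i-1) (j-1)
                    else if i = 2*Suc m-1 \<and> j = 2*Suc m-1 then 1 else 0) = sm m M" for M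
    unfolding sm_def mk_def by (intro ext) auto
  moreover have "(M \<in> Mats (2*Suc m-2) \<and>
       mmul (2*Suc m-2) (mmul (2*Suc m-2) (mtrans M) (Jmat (Suc m-1))) M = Jmat (Suc m-1)) \<longleftrightarrow> M \<in> SpS m" for M
    using Sp_conv[of M m] by (auto simp: SpS_def)
  ultimately show ?thesis unfolding Spgrp_def by auto
qed

lemma Tgrp_eq: "Tgrp (Suc m) = {tm m a v | a v. supp (2*m) v}"
proof -
  have "(\<lambda>i j. if i = j \<and> i < 2*Suc m then 1
                    else if 1 \<le> i \<and> i \<le> 2*Suc m-2 \<and> j = 0 then mvec (2*Suc m-2) (Jmat (Suc m-1)) v (i-1) / 2
                    else if i = 2*Suc m-1 \<and> j = 0 then a
                    else if i = 2*Suc m-1 \<and> 1 \<le> j \<and> j \<le> 2*Suc m-2 then v (j-1) else 0) = tm m a v" for a v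
    unfolding tm_def mk_def mid_def by (intro ext) auto
  thus ?thesis unfolding Tgrp_def supp_def by auto
qed

lemma mid_N: "mid (Suc (Suc (2*m))) = mk m (\<lambda>_. 0) (mid (2*m)) 0 (\<lambda>_. 0) 1"
  unfolding mk_def mid_def by (intro ext) auto

lemma dot_zero1[simp]: "dot k (\<lambda>_. 0) x = 0" unfolding dot_def by simp

lemma mvec_smid: "i < k \<Longrightarrow> mvec k (\<lambda>i j. \<alpha> * mid k i j) x i = \<alpha> * x i"
  using mvec_mid[of k x] unfolding mvec_def by (simp add: sum_distrib_left[symmetric] mult.assoc) meson

lemma mmul_smid: "mmul k (\<lambda>i j. \<alpha> * mid k i j) B i j = (if i < k \<and> j < k then \<alpha> * B i j else 0)"
  using mvec_smid[of i k \<alpha> "col B j"] unfolding mmul_col col_def by (auto simp: mvec_def)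

lemma smid_mul: "mmul k (\<lambda>i j. \<alpha> * mid k i j) (\<lambda>i j. \<beta> * mid k i j) = (\<lambda>i j. (\<alpha>*\<beta>) * mid k i j)"
  by (intro ext) (simp only: mmul_smid, auto simp: mid_def)

lemma mvec_half: "mvec k M (\<lambda>i. x i / 2) i = mvec k M x i / 2"
  unfolding mvec_def by (simp add: sum_divide_distrib[symmetric])

lemma G_prod:
  assumes "M \<in> Mats (2*m)"
  shows "mmul (Suc (Suc (2*m))) (dm m \<alpha>) (mmul (Suc (Suc (2*m))) (sm m M) (tm m a v)) = Gp m \<alpha> M a v"
  unfolding dm_def sm_def tm_def mmul_mk Gp_def
  using assms by (intro mk_eqI) (auto simp: mvec_smid mmul_smid mmul_mid_right mvec_half power2_eq_square)

lemma dot_mid: "j < k \<Longrightarrow> dot k v (col (mid k) j) = v j"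
  unfolding dot_def col_def mid_def by (simp add: if_distrib cong: if_cong)

lemma Jv_neg: "Jv m (\<lambda>i. - v i) = (\<lambda>i. - Jv m v i)"
  unfolding mvec_def by (auto simp: sum_negf[symmetric])

lemma dot_Jv_self: "dot (2*m) v (Jv m v) = 0"
  using Om_J[of m v "Jv m v"] by simp

lemma dot_half: "dot k r (\<lambda>i. x i / 2) = dot k r x / 2"
  unfolding dot_def by (simp add: sum_divide_distrib)
lemma dot_neg: "dot k r (\<lambda>i. - x i) = - dot k r x"
  unfolding dot_def by (simp add: sum_negf[symmetric])

lemma tm_inv: "mmul (Suc (Suc (2*m))) (tm m a v) (tm m (-a) (\<lambda>i. - v i)) = mid (Suc (Suc (2*m)))"
  unfolding tm_def mmul_mk mid_N
  by (intro mk_eqI) (auto simp: mvec_mid Jv_neg mmul_mid_right mid_Mats dot_mid dot_half dot_neg dot_Jv_self)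

lemma dm_inv: "\<alpha> \<noteq> 0 \<Longrightarrow> mmul (Suc (Suc (2*m))) (dm m \<alpha>) (dm m (1/\<alpha>)) = mid (Suc (Suc (2*m)))"
  unfolding dm_def mmul_mk smid_mul mid_N
  by (intro mk_eqI) (auto simp: power2_eq_square)

lemma sm_inv: "mmul (2*m) M M' = mid (2*m) \<Longrightarrow> mmul (Suc (Suc (2*m))) (sm m M) (sm m M') = mid (Suc (Suc (2*m)))"
  unfolding sm_def mmul_mk mid_N by (intro mk_eqI) auto

lemma mk_Mats': "mk m p B a r lam \<in> Mats (Suc (Suc (2*m)))" by (rule mk_Mats)

lemma dm_invertible: "\<alpha> \<noteq> 0 \<Longrightarrow> invertible_mtx (Suc (Suc (2*m))) (dm m \<alpha>)"
  unfolding invertible_mtx_def using dm_inv[of \<alpha> m] dm_inv[of "1/\<alpha>" m]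
  by (auto simp: dm_def intro!: exI[of _ "dm m (1/\<alpha>)"] mk_Mats)

lemma tm_invertible: "invertible_mtx (Suc (Suc (2*m))) (tm m a v)"
  unfolding invertible_mtx_def using tm_inv[of m a v] tm_inv[of m "-a" "\<lambda>i. - v i"]
  by (auto simp: tm_def intro!: exI[of _ "tm m (-a) (\<lambda>i. - v i)"] mk_Mats)

lemma sm_invertible: "invertible_mtx (2*m) M \<Longrightarrow> invertible_mtx (Suc (Suc (2*m))) (sm m M)"
  unfolding invertible_mtx_def using sm_inv
  by (auto simp: sm_def intro!: mk_Mats)

lemma G_invertible:
  assumes "\<alpha> \<noteq> 0" "M \<in> SpS m"
  shows "invertible_mtx (Suc (Suc (2*m))) (Gp m \<alpha> M a v)"
proof -
  have MM: "M \<in> Mats (2*m)" using assms unfolding SpS_def by simp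
  have "invertible_mtx (2*m) M" using Tr_inv[OF SpS_Tr[OF assms(2)]] .
  hence "invertible_mtx (Suc (Suc (2*m))) (mmul (Suc (Suc (2*m))) (sm m M) (tm m a v))"
    using sm_invertible tm_invertible invertible_mul by (metis sm_def tm_def mk_Mats)
  hence "invertible_mtx (Suc (Suc (2*m))) (mmul (Suc (Suc (2*m))) (dm m \<alpha>) (mmul (Suc (Suc (2*m))) (sm m M) (tm m a v)))"
    using dm_invertible[OF assms(1)] invertible_mul by (metis dm_def mk_Mats mmul_Mats)
  thus ?thesis using G_prod[OF MM] by simp
qed



lemma dot_lin: "dot k r (\<lambda>i. a * x i + b * y i) = a * dot k r x + b * dot k r y"
  unfolding dot_def by (simp add: sum.distrib sum_distrib_left algebra_simps)

lemma Om_aff: "Om m (\<lambda>i. a * p i + x i) (\<lambda>i. b * p i + y i) = a * Om m p y + b * Om m x p + Om m x y"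
proof -
  have "Om m (\<lambda>i. a * p i + 1 * x i) (\<lambda>i. b * p i + 1 * y i) = a * Om m p y + b * Om m x p + Om m x y"
    by (simp only: Om_lin1 Om_lin2) (simp add: algebra_simps)
  thus ?thesis by simp
qed

lemma tr_mkv: "tr m u = mkv m (u 0) (\<lambda>i. u (Suc i)) (u (Suc (2*m)))" by (simp add: tr_def)

lemma mk_hom:
  assumes i: "\<And>y. Om m p (mvec (2*m) B y) = dot (2*m) r y / 2"
    and ii: "\<And>x y. Om m (mvec (2*m) B x) (mvec (2*m) B y) = lam * Om m x y"
  shows "mvec (Suc (Suc (2*m))) (mk m p B a r lam) (chbr (Suc m) u v) =
         chbr (Suc m) (mvec (Suc (Suc (2*m))) (mk m p B a r lam) u) (mvec (Suc (Suc (2*m))) (mk m p B a r lam) v)"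
proof -
  define A where "A = mk m p B a r lam"
  define u0 where "u0 = u 0"
  define x where "x = (\<lambda>i. u (Suc i))"
  define uw where "uw = u (Suc (2*m))"
  define v0 where "v0 = v 0"
  define y where "y = (\<lambda>i. v (Suc i))"
  define vw where "vw = v (Suc (2*m))"
  have cu: "chbr (Suc m) u v = chbr (Suc m) (mkv m u0 x uw) (mkv m v0 y vw)"
    using chbr_tr[of m u v] unfolding tr_def u0_def x_def uw_def v0_def y_def vw_def .
  have mu: "mvec (Suc (Suc (2*m))) A u = mvec (Suc (Suc (2*m))) A (mkv m u0 x uw)"
    using mvec_tr[of m A u] unfolding tr_def u0_def x_def uw_def by simp
  have mv: "mvec (Suc (Suc (2*m))) A v = mvec (Suc (Suc (2*m))) A (mkv m v0 y vw)"
    using mvec_tr[of m A v] unfolding tr_def v0_def y_def vw_def by simp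
  define z where "z = (\<lambda>i. (u0 / 2) * y i + (- v0 / 2) * x i)"
  have z_eq: "(\<lambda>i. (u0 * y i - v0 * x i) / 2) = z" unfolding z_def by (auto simp: field_simps)
  have L: "mvec (Suc (Suc (2*m))) A (chbr (Suc m) u v) =
     mkv m 0 (\<lambda>i. mvec (2*m) B z i) (dot (2*m) r z + lam * (u0 * vw - v0 * uw - Om m x y))"
    unfolding cu chbr_mkv z_eq A_def mvec_mk by simp
  have R: "chbr (Suc m) (mvec (Suc (Suc (2*m))) A u) (mvec (Suc (Suc (2*m))) A v) =
     mkv m 0 (\<lambda>i. (u0 * (v0 * p i + mvec (2*m) B y i) - v0 * (u0 * p i + mvec (2*m) B x i)) / 2)
       (u0 * (v0 * a + dot (2*m) r y + lam * vw) - v0 * (u0 * a + dot (2*m) r x + lam * uw)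
        - Om m (\<lambda>i. u0 * p i + mvec (2*m) B x i) (\<lambda>i. v0 * p i + mvec (2*m) B y i))"
    unfolding mu mv unfolding A_def mvec_mk chbr_mkv ..
  have Om_XY: "Om m (\<lambda>i. u0 * p i + mvec (2*m) B x i) (\<lambda>i. v0 * p i + mvec (2*m) B y i)
     = u0 * (dot (2*m) r y / 2) - v0 * (dot (2*m) r x / 2) + lam * Om m x y"
    unfolding Om_aff i ii using Om_antisym[of m "mvec (2*m) B x" p] i[of x] by simp
  have dz: "dot (2*m) r z = (u0/2) * dot (2*m) r y + (- v0 / 2) * dot (2*m) r x"
    unfolding z_def dot_lin ..
  have mz: "mvec (2*m) B z = (\<lambda>i. (u0/2) * mvec (2*m) B y i + (- v0 / 2) * mvec (2*m) B x i)"
    unfolding z_def mvec_lin ..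
  show ?thesis unfolding A_def[symmetric] L R
    by (rule mkv_eqI) (simp_all only: Om_XY dz mz, simp_all add: algebra_simps)
qed



lemma mvec_scaleM: "mvec k (\<lambda>i j. c * M i j) y = (\<lambda>i. c * mvec k M y i)"
  unfolding mvec_def by (auto intro!: ext simp: sum_distrib_left mult.assoc)
lemma dot_scale1: "dot k (\<lambda>j. c * r j) y = c * dot k r y"
  unfolding dot_def by (simp add: sum_distrib_left mult.assoc)

lemma Aut_eq: "Aut_ch (Suc m) = {A \<in> Mats (Suc (Suc (2*m))). invertible_mtx (Suc (Suc (2*m))) A \<and>
      (\<forall>u v. mvec (Suc (Suc (2*m))) A (chbr (Suc m) u v) =
         chbr (Suc m) (mvec (Suc (Suc (2*m))) A u) (mvec (Suc (Suc (2*m))) A v))}"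
  unfolding Aut_ch_def N_eq ..

lemma G_Aut:
  assumes "\<alpha> \<noteq> 0" "M \<in> SpS m"
  shows "Gp m \<alpha> M a v \<in> Aut_ch (Suc m)"
proof -
  have i: "Om m (\<lambda>i. \<alpha> * mvec (2*m) M (Jv m v) i / 2) (mvec (2*m) (\<lambda>i j. \<alpha> * M i j) y)
           = dot (2*m) (\<lambda>j. \<alpha>^2 * v j) y / 2" for y
  proof -
    have e: "(\<lambda>i. \<alpha> * mvec (2*m) M (Jv m v) i / 2) = (\<lambda>i. (\<alpha>/2) * mvec (2*m) M (Jv m v) i)" by auto
    have "Om m (\<lambda>i. \<alpha> * mvec (2*m) M (Jv m v) i / 2) (mvec (2*m) (\<lambda>i j. \<alpha> * M i j) y)
       = Om m (\<lambda>i. (\<alpha>/2) * mvec (2*m) M (Jv m v) i) (\<lambda>i. \<alpha> * mvec (2*m) M y i)"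
      unfolding mvec_scaleM e ..
    also have "\<dots> = (\<alpha>/2) * \<alpha> * Om m (mvec (2*m) M (Jv m v)) (mvec (2*m) M y)"
      by (simp only: Om_scale1 Om_scale2)
    also have "\<dots> = (\<alpha>/2) * \<alpha> * dot (2*m) v y" by (simp add: Om_mvec[OF assms(2)] Om_J)
    finally show ?thesis by (simp add: dot_scale1 power2_eq_square)
  qed
  have ii: "Om m (mvec (2*m) (\<lambda>i j. \<alpha> * M i j) x) (mvec (2*m) (\<lambda>i j. \<alpha> * M i j) y) = \<alpha>^2 * Om m x y" for x y
    unfolding mvec_scaleM by (simp add: Om_scale1 Om_scale2 Om_mvec[OF assms(2)] power2_eq_square)
  show ?thesis unfolding Aut_eq
    using G_invertible[OF assms] mk_hom[OF i ii] by (auto simp: Gp_def mk_Mats)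
qed

lemma ek_mkv0: "ek 0 = mkv m 1 (\<lambda>_. 0) 0" unfolding ek_def mkv_def by auto
lemma ek_mkvw: "ek (Suc (2*m)) = mkv m 0 (\<lambda>_. 0) 1" unfolding ek_def mkv_def by auto
lemma ek_mkvj: "j < 2*m \<Longrightarrow> ek (Suc j) = mkv m 0 (ek j) 0" unfolding ek_def mkv_def by (intro ext) auto

lemma col_as_mkv: "A \<in> Mats (Suc (Suc (2*m))) \<Longrightarrow> col A j = mkv m (A 0 j) (\<lambda>i. A (Suc i) j) (A (Suc (2*m)) j)"
  unfolding col_def mkv_def Mats_def by (auto intro!: ext)

lemma mvec_ek: "A \<in> Mats k \<Longrightarrow> j < k \<Longrightarrow> mvec k A (ek j) = col A j"
proof (intro ext)
  fix i assume AM: "A \<in> Mats k" and j: "j < k"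
  show "mvec k A (ek j) i = col A j i"
  proof (cases "i < k")
    case True
    have "(\<Sum>l<k. A i l * ek j l) = (\<Sum>l<k. if l = j then A i l else 0)" by (intro sum.cong) (auto simp: ek_def)
    thus ?thesis using True j by (simp add: mvec_def col_def)
  next
    case False
    thus ?thesis using AM unfolding mvec_def col_def Mats_def by auto
  qed
qed



lemma chbr_at0: "chbr n u v 0 = 0" unfolding chbr_def by simp

lemma mvec_scale: "mvec k A (\<lambda>p. c * e p) = (\<lambda>i. c * mvec k A e i)"
  using mvec_lin[of k A c e 0 e] by simp

lemma mkv_scale: "mkv m (c*u0) (\<lambda>i. c * x i) (c*uw) = (\<lambda>p. c * mkv m u0 x uw p)"
  unfolding mkv_def by (intro ext) auto

lemma Aut_struct:
  assumes A: "A \<in> Aut_ch (Suc m)" "1 \<le> m"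
  shows "A = mk m (\<lambda>i. A (Suc i) 0) (\<lambda>i j. A (Suc i) (Suc j)) (A (Suc (2*m)) 0) (\<lambda>j. A (Suc (2*m)) (Suc j)) (A (Suc (2*m)) (Suc (2*m)))"
    and "A (Suc (2*m)) (Suc (2*m)) \<noteq> 0"
proof -
  let ?N = "Suc (Suc (2*m))" and ?w = "Suc (2*m)"
  have AM: "A \<in> Mats ?N" and inv: "invertible_mtx ?N A"
    and H: "\<And>u v. mvec ?N A (chbr (Suc m) u v) = chbr (Suc m) (mvec ?N A u) (mvec ?N A v)"
    using A(1) unfolding Aut_eq by auto
  have me: "j < ?N \<Longrightarrow> mvec ?N A (ek j) = col A j" for j using mvec_ek[OF AM] .
  have cm: "col A j = mkv m (A 0 j) (\<lambda>i. A (Suc i) j) (A ?w j)" for j by (rule col_as_mkv[OF AM])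
  have r0: "A 0 (Suc j) = 0" if j: "j < 2*m" for j
  proof -
    have "chbr (Suc m) (ek 0) (ek (Suc j)) = (\<lambda>p. (1/2) * ek (Suc j) p)"
      unfolding ek_mkv0[of m] ek_mkvj[OF j] chbr_mkv mkv_scale[symmetric] by simp
    hence "mvec ?N A (chbr (Suc m) (ek 0) (ek (Suc j))) = (\<lambda>i. (1/2) * mvec ?N A (ek (Suc j)) i)"
      by (simp only: mvec_scale)
    hence "mvec ?N A (chbr (Suc m) (ek 0) (ek (Suc j))) 0 = (1/2) * A 0 (Suc j)"
      using j me[of "Suc j"] by (simp add: col_def)
    thus ?thesis using H[of "ek 0" "ek (Suc j)"] chbr_at0 by (metis divide_eq_0_iff mult_eq_0_iff zero_neq_numeral one_neq_zero)
  qed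
  have m2: "m < 2*m" "0 < 2*m" using A(2) by auto
  have cw: "col A ?w = mkv m 0 (\<lambda>_. 0) (A ?w ?w)"
  proof -
    have "Om m (ek m) (ek 0) = -1" using m2 by (simp add: Om_ek1) (simp add: ek_def)
    hence "chbr (Suc m) (ek (Suc m)) (ek (Suc 0)) = ek ?w"
      unfolding ek_mkvj[OF m2(1)] ek_mkvj[OF m2(2)] chbr_mkv ek_mkvw by simp
    hence "col A ?w = chbr (Suc m) (col A (Suc m)) (col A (Suc 0))"
      using H[of "ek (Suc m)" "ek (Suc 0)"] me m2 by simp
    also have "\<dots> = mkv m 0 (\<lambda>_. 0) (- Om m (\<lambda>i. A (Suc i) (Suc m)) (\<lambda>i. A (Suc i) (Suc 0)))"
      unfolding cm[of "Suc m"] cm[of "Suc 0"] chbr_mkv using r0[OF m2(1)] r0[OF m2(2)] by simp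
    finally have e: "col A ?w = mkv m 0 (\<lambda>_. 0) (- Om m (\<lambda>i. A (Suc i) (Suc m)) (\<lambda>i. A (Suc i) (Suc 0)))" .
    hence "A ?w ?w = - Om m (\<lambda>i. A (Suc i) (Suc m)) (\<lambda>i. A (Suc i) (Suc 0))"
    proof -
      have "col A ?w ?w = mkv m 0 (\<lambda>_. 0) (- Om m (\<lambda>i. A (Suc i) (Suc m)) (\<lambda>i. A (Suc i) (Suc 0))) ?w"
        by (simp only: e)
      thus ?thesis by (simp add: col_def)
    qed
    thus ?thesis using e by simp
  qed
  have lam: "A ?w ?w \<noteq> 0"
  proof
    assume z: "A ?w ?w = 0"
    obtain B' where B': "mmul ?N B' A = mid ?N" using inv unfolding invertible_mtx_def by blast
    have "mvec ?N B' (col A ?w) ?w = 1" using fun_cong[OF fun_cong[OF B', of ?w], of ?w]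
      by (simp add: mmul_col mid_def)
    thus False unfolding cw z mvec_split[of ?w m B', OF lessI] by simp
  qed
  show "A ?w ?w \<noteq> 0" by (rule lam)
  have a00: "A 0 0 = 1"
  proof -
    have "chbr (Suc m) (ek 0) (ek ?w) = ek ?w" unfolding ek_mkv0[of m] ek_mkvw chbr_mkv by simp
    hence "col A ?w = chbr (Suc m) (col A 0) (col A ?w)" using H[of "ek 0" "ek ?w"] me by simp
    hence "col A ?w ?w = chbr (Suc m) (col A 0) (col A ?w) ?w" by simp
    hence "A ?w ?w = A 0 0 * A ?w ?w" unfolding cw unfolding cm[of 0] chbr_mkv by simp
    thus ?thesis using lam by simp
  qed
  have cw': "A (Suc i) ?w = 0" if "i < 2*m" for i
    using fun_cong[OF cw, of "Suc i"] that by (auto simp: col_def)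
  have cw0: "A 0 ?w = 0"
    using fun_cong[OF cw, of 0] by (auto simp: col_def)
  have mkZ: "mk m p B a r lam i j = 0" if "?N \<le> i \<or> ?N \<le> j" for p B a r lam i j
    using mk_Mats[of m p B a r lam] that unfolding Mats_def by auto
  have AZ: "A i j = 0" if "?N \<le> i \<or> ?N \<le> j" for i j using AM that unfolding Mats_def by auto
  show "A = mk m (\<lambda>i. A (Suc i) 0) (\<lambda>i j. A (Suc i) (Suc j)) (A (Suc (2*m)) 0) (\<lambda>j. A (Suc (2*m)) (Suc j)) (A (Suc (2*m)) (Suc (2*m)))"
  proof (intro ext)
    fix i j
    show "A i j = mk m (\<lambda>i. A (Suc i) 0) (\<lambda>i j. A (Suc i) (Suc j)) (A (Suc (2*m)) 0) (\<lambda>j. A (Suc (2*m)) (Suc j)) (A (Suc (2*m)) (Suc (2*m))) i j"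
      by (cases i rule: idx_cases[where m=m]; cases j rule: idx_cases[where m=m])
         (auto simp: a00 r0 cw' cw0 AZ mkZ m2)
  qed
qed



lemma Om_nondeg: assumes "\<And>z. Om m d z = 0" "i < 2*m" shows "d i = 0"
proof (cases "i < m")
  case True thus ?thesis using assms(1)[of "ek (i+m)"] by (simp add: Om_ek2)
next
  case False 
  hence "i - m < m" "i - m + m = i" "\<not> m \<le> i - m" using assms(2) by auto
  thus ?thesis using assms(1)[of "ek (i-m)"] by (simp add: Om_ek2)
qed

lemma mkv_supp: "mvec (Suc (Suc (2*m))) (mid (Suc (Suc (2*m)))) (mkv m u0 x uw) = mkv m u0 x uw"
  unfolding mvec_mid by (intro ext) (auto simp: mkv_def)

lemma Aut_decomp:
  assumes A: "A \<in> Aut_ch (Suc m)" "1 \<le> m" "A (Suc (2*m)) (Suc (2*m)) > 0"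
  shows "\<exists>\<alpha> M a v. \<alpha> > 0 \<and> M \<in> SpS m \<and> supp (2*m) v \<and> A = Gp m \<alpha> M a v"
proof -
  let ?N = "Suc (Suc (2*m))" and ?w = "Suc (2*m)"
  define p where "p = (\<lambda>i. A (Suc i) 0)"
  define B where "B = (\<lambda>i j. A (Suc i) (Suc j))"
  define a where "a = A ?w 0"
  define r where "r = (\<lambda>j. A ?w (Suc j))"
  define lam where "lam = A ?w ?w"
  have Aeq: "A = mk m p B a r lam" unfolding p_def B_def a_def r_def lam_def by (rule Aut_struct[OF A(1,2)])
  have lp: "lam > 0" using A(3) unfolding lam_def .
  have inv: "invertible_mtx ?N A"
    and H: "\<And>u v. mvec ?N A (chbr (Suc m) u v) = chbr (Suc m) (mvec ?N A u) (mvec ?N A v)"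
    using A(1) unfolding Aut_eq by auto
  have i: "Om m p (mvec (2*m) B y) = dot (2*m) r y / 2" for y
  proof -
    have "mkv m 0 (\<lambda>i. 0 * p i + mvec (2*m) B (\<lambda>i. (1 * y i - 0 * 0) / 2) i)
             (0 * a + dot (2*m) r (\<lambda>i. (1 * y i - 0 * 0) / 2) + lam * (1 * 0 - 0 * 0 - Om m (\<lambda>_. 0) y))
        = mkv m 0 (\<lambda>i. (1 * (0 * p i + mvec (2*m) B y i) - 0 * (1 * p i + mvec (2*m) B (\<lambda>_. 0) i)) / 2)
           (1 * (0 * a + dot (2*m) r y + lam * 0) - 0 * (1 * a + dot (2*m) r (\<lambda>_. 0) + lam * 0) -
            Om m (\<lambda>i. 1 * p i + mvec (2*m) B (\<lambda>_. 0) i) (\<lambda>i. 0 * p i + mvec (2*m) B y i))"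
      using H[of "mkv m 1 (\<lambda>_. 0) 0" "mkv m 0 y 0"] unfolding Aeq chbr_mkv mvec_mk .
    from mkv_eqD(3)[OF this] show ?thesis by (simp add: dot_half)
  qed
  have ii: "Om m (mvec (2*m) B x) (mvec (2*m) B y) = lam * Om m x y" for x y
  proof -
    have "mkv m 0 (\<lambda>i. 0 * p i + mvec (2*m) B (\<lambda>i. (0 * y i - 0 * x i) / 2) i)
             (0 * a + dot (2*m) r (\<lambda>i. (0 * y i - 0 * x i) / 2) + lam * (0 * 0 - 0 * 0 - Om m x y))
        = mkv m 0 (\<lambda>i. (0 * (0 * p i + mvec (2*m) B y i) - 0 * (0 * p i + mvec (2*m) B x i)) / 2)
           (0 * (0 * a + dot (2*m) r y + lam * 0) - 0 * (0 * a + dot (2*m) r x + lam * 0) -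
            Om m (\<lambda>i. 0 * p i + mvec (2*m) B x i) (\<lambda>i. 0 * p i + mvec (2*m) B y i))"
      using H[of "mkv m 0 x 0" "mkv m 0 y 0"] unfolding Aeq chbr_mkv mvec_mk .
    from mkv_eqD(3)[OF this] show ?thesis by simp
  qed
  have surj: "\<exists>x. \<forall>i<2*m. mvec (2*m) B x i = z i" for z
  proof -
    obtain A' where A': "mmul ?N A A' = mid ?N" using inv unfolding invertible_mtx_def by blast
    define U where "U = mvec ?N A' (mkv m 0 z 0)"
    have "mvec ?N A U = mkv m 0 z 0" unfolding U_def mvec_mmul[symmetric] A' mkv_supp ..
    moreover have "mvec ?N A U = mkv m (U 0) (\<lambda>i. U 0 * p i + mvec (2*m) B (\<lambda>i. U (Suc i)) i)
        (U 0 * a + dot (2*m) r (\<lambda>i. U (Suc i)) + lam * U ?w)"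
      unfolding mvec_tr[of m A U, symmetric] tr_mkv unfolding Aeq mvec_mk ..
    ultimately have e: "mkv m 0 z 0 = mkv m (U 0) (\<lambda>i. U 0 * p i + mvec (2*m) B (\<lambda>i. U (Suc i)) i)
        (U 0 * a + dot (2*m) r (\<lambda>i. U (Suc i)) + lam * U ?w)" by simp
    have "U 0 = 0" using mkv_eqD(1)[OF e] by simp
    thus ?thesis using mkv_eqD(2)[OF e] by auto
  qed
  define q where "q = (\<lambda>i. (1 / (2*lam)) * mvec (2*m) B (Jv m r) i)"
  have pq: "p i = q i" if "i < 2*m" for i
  proof -
    have d0: "Om m (\<lambda>i. p i - q i) (mvec (2*m) B y) = 0" for y
    proof -
      have "Om m q (mvec (2*m) B y) = (1 / (2*lam)) * (lam * dot (2*m) r y)"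
        unfolding q_def Om_scale1 ii Om_J ..
      thus ?thesis unfolding Om_diff1 i using lp by simp
    qed
    have "Om m (\<lambda>i. p i - q i) z = 0" for z
    proof -
      obtain x where x: "\<forall>i<2*m. mvec (2*m) B x i = z i" using surj by blast
      have "Om m (\<lambda>i. p i - q i) z = Om m (\<lambda>i. p i - q i) (mvec (2*m) B x)" by (rule Om_cong) (auto simp: x)
      thus ?thesis using d0 by simp
    qed
    from Om_nondeg[OF this that] show ?thesis by simp
  qed
  define \<alpha> where "\<alpha> = sqrt lam"
  have ap: "\<alpha> > 0" "\<alpha>^2 = lam" unfolding \<alpha>_def using lp by auto
  define M where "M = (\<lambda>i j. if i < 2*m \<and> j < 2*m then B i j / \<alpha> else 0)"
  define v where "v = (\<lambda>j. if j < 2*m then r j / lam else 0)"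
  have MS: "M \<in> SpS m"
    unfolding SpS_def
  proof (intro CollectI conjI allI impI)
    show "M \<in> Mats (2*m)" unfolding M_def Mats_def by auto
    fix i j assume ij: "i < 2*m" "j < 2*m"
    have "Om m (col M i) (col M j) = Om m (\<lambda>p. (1/\<alpha>) * mvec (2*m) B (ek i) p) (\<lambda>p. (1/\<alpha>) * mvec (2*m) B (ek j) p)"
    proof (rule Om_cong)
      fix p assume "p < 2*m"
      have "mvec (2*m) B (ek k) p = B p k" if "k < 2*m" for k
      proof -
        have "(\<Sum>l<2*m. B p l * ek k l) = (\<Sum>l<2*m. if l = k then B p l else 0)"
          by (intro sum.cong) (auto simp: ek_def)
        thus ?thesis using that \<open>p < 2*m\<close> by (simp add: mvec_def)
      qed
      thus "col M i p = (1/\<alpha>) * mvec (2*m) B (ek i) p" "col M j p = (1/\<alpha>) * mvec (2*m) B (ek j) p"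
        using ij \<open>p < 2*m\<close> unfolding col_def M_def by auto
    qed
    also have "\<dots> = (1/\<alpha>) * (1/\<alpha>) * (lam * Om m (ek i) (ek j))" unfolding Om_scale1 Om_scale2 ii by simp
    also have "\<dots> = Om m (ek i) (ek j)" using ap lp by (simp add: power2_eq_square)
    finally show "Om m (col M i) (col M j) = Om m (ek i) (ek j)" .
  qed
  have sv: "supp (2*m) v" unfolding supp_def v_def by auto
  have Jvv: "Jv m v = (\<lambda>i. (1/lam) * Jv m r i)"
    unfolding mvec_def v_def by (auto intro!: ext simp: sum_divide_distrib intro!: sum.cong)
  have "A = Gp m \<alpha> M (a / lam) v"
    unfolding Aeq Gp_def
  proof (rule mk_eqI)
    fix i assume i2: "i < 2*m"
    have "mvec (2*m) M (Jv m v) i = (1/\<alpha>) * (1/lam) * mvec (2*m) B (Jv m r) i"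
    proof -
      have mb: "mvec (2*m) M X i = (1/\<alpha>) * mvec (2*m) B X i" for X
        unfolding mvec_def M_def using i2 by (auto simp: sum_distrib_left intro!: sum.cong)
      show ?thesis unfolding Jvv mvec_scale mb by simp
    qed
    thus "p i = \<alpha> * mvec (2*m) M (Jv m v) i / 2" using pq[OF i2] ap unfolding q_def by simp
  next
    fix i j assume "i < 2*m" "j < 2*m" thus "B i j = \<alpha> * M i j" using ap unfolding M_def by simp
  next
    show "a = \<alpha>^2 * (a / lam)" using ap lp by simp
  next
    fix j assume "j < 2*m" thus "r j = \<alpha>^2 * v j" using ap lp unfolding v_def by simp
  next
    show "lam = \<alpha>^2" using ap by simp
  qed
  thus ?thesis using ap MS sv by blast
qed



lemma cont_if_const [continuous_intros]:
  "continuous_on S f \<Longrightarrow> continuous_on S g \<Longrightarrow> continuous_on S (\<lambda>t. if P then f t else g t)"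
  by (cases P) auto

lemma cont_coord2: "continuous_on S (\<lambda>A::mtx. A i j)"
proof -
  have "continuous_on S (\<lambda>A::mtx. A i)"
    by (rule continuous_on_product_then_coordinatewise) (rule continuous_on_id)
  thus ?thesis by (rule continuous_on_product_then_coordinatewise)
qed

lemma Gp_cont:
  assumes M: "\<And>i j. continuous_on S (\<lambda>t. Mt t i j)" and al: "continuous_on S al"
    and aa: "continuous_on S aa" and vv: "\<And>i. continuous_on S (\<lambda>t. vv t i)"
  shows "continuous_on S (\<lambda>t. Gp m (al t) (Mt t) (aa t) (vv t))"
proof (intro continuous_on_coordinatewise_then_product)
  fix i j
  show "continuous_on S (\<lambda>t. Gp m (al t) (Mt t) (aa t) (vv t) i j)"
    unfolding Gp_def mk_def mvec_def
    by (intro continuous_intros M al aa vv) auto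
qed

definition X_of where "X_of m = subtopology euclidean (Aut_ch (Suc m))"

lemma cc_path:
  assumes "continuous_on {0..1::real} g" "g ` {0..1} \<subseteq> Aut_ch (Suc m)"
  shows "connected_component_of (X_of m) (g 0) (g 1)"
  unfolding connected_component_of_def X_of_def
  by (rule exI[of _ "g ` {0..1}"]) (use assms in \<open>auto simp: connectedin_subtopology intro!: connected_continuous_image\<close>)

lemma Gp_id: "Gp m 1 (mid (2*m)) 0 (\<lambda>_. 0) = mid (Suc (Suc (2*m)))"
  unfolding Gp_def mid_N by (intro mk_eqI) auto

lemma tv0: "tv m u 0 M = M" unfolding tv_def by simp

lemma Tr_conn: "M \<in> Tr m \<Longrightarrow> \<alpha> > 0 \<Longrightarrow> connected_component_of (X_of m) (mid (Suc (Suc (2*m)))) (Gp m \<alpha> M a v)"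
proof (induction M arbitrary: \<alpha> a v rule: Tr.induct)
  case Tr_id
  define g where "g = (\<lambda>t::real. Gp m (1 + t * (\<alpha> - 1)) (mid (2*m)) (t * a) (\<lambda>i. t * v i))"
  have "continuous_on {0..1} g" unfolding g_def
    by (intro Gp_cont continuous_intros)
  moreover have "g ` {0..1} \<subseteq> Aut_ch (Suc m)"
  proof
    fix y assume "y \<in> g ` {0..1}"
    then obtain t where t: "t \<in> {0..1::real}" "y = g t" by auto
    have "1 + t * (\<alpha> - 1) > 0"
    proof (cases "\<alpha> \<ge> 1")
      case True thus ?thesis using t by (simp add: add_pos_nonneg)
    next
      case False
      have "t * (1 - \<alpha>) \<le> 1 * (1 - \<alpha>)" using t False by (intro mult_right_mono) auto
      thus ?thesis using Tr_id by (simp add: algebra_simps)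
    qed
    thus "y \<in> Aut_ch (Suc m)" unfolding t g_def by (intro G_Aut mid_SpS) auto
  qed
  ultimately have "connected_component_of (X_of m) (g 0) (g 1)" by (rule cc_path)
  moreover have "g 0 = mid (Suc (Suc (2*m)))" unfolding g_def using Gp_id by simp
  moreover have "g 1 = Gp m \<alpha> (mid (2*m)) a v" unfolding g_def by simp
  ultimately show ?case by simp
next
  case (Tr_tv M u c)
  define g where "g = (\<lambda>t::real. Gp m \<alpha> (tv m u (t * c) M) a v)"
  have "continuous_on {0..1} g" unfolding g_def tv_def
    by (intro Gp_cont continuous_intros)
  moreover have "g ` {0..1} \<subseteq> Aut_ch (Suc m)"
    unfolding g_def using Tr_tv tv_SpS[OF Tr_SpS[OF Tr_tv.hyps(1)] Tr_tv.hyps(2)] by (auto intro!: G_Aut)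
  ultimately have "connected_component_of (X_of m) (g 0) (g 1)" by (rule cc_path)
  moreover have "g 0 = Gp m \<alpha> M a v" "g 1 = Gp m \<alpha> (tv m u c M) a v" unfolding g_def by (auto simp: tv0)
  ultimately show ?case using Tr_tv.IH[OF Tr_tv.prems] connected_component_of_trans by metis
qed



lemma SpS_Mats: "M \<in> SpS m \<Longrightarrow> M \<in> Mats (2*m)" unfolding SpS_def by simp

lemma RHS_eq:
  "{mmul (Suc (Suc (2*m))) d (mmul (Suc (Suc (2*m))) s t) | d s t. d \<in> Dgrp (Suc m) \<and> s \<in> Spgrp (Suc m) \<and> t \<in> Tgrp (Suc m)}
   = {Gp m \<alpha> M a v | \<alpha> M a v. \<alpha> > 0 \<and> M \<in> SpS m \<and> supp (2*m) v}"
  unfolding Dgrp_eq Spgrp_eq Tgrp_eq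
proof (intro equalityI subsetI)
  fix y assume "y \<in> {Gp m \<alpha> M a v | \<alpha> M a v. \<alpha> > 0 \<and> M \<in> SpS m \<and> supp (2*m) v}"
  then obtain \<alpha> M a v where y: "y = Gp m \<alpha> M a v" "\<alpha> > 0" "M \<in> SpS m" "supp (2*m) v" by blast
  have "y = mmul (Suc (Suc (2*m))) (dm m \<alpha>) (mmul (Suc (Suc (2*m))) (sm m M) (tm m a v))"
    using G_prod[OF SpS_Mats[OF y(3)]] y(1) by simp
  thus "y \<in> {mmul (Suc (Suc (2*m))) d (mmul (Suc (Suc (2*m))) s t) | d s t. d \<in> {dm m \<alpha> | \<alpha>. \<alpha> > 0} \<and> s \<in> {sm m M | M. M \<in> SpS m} \<and> t \<in> {tm m a v | a v. supp (2*m) v}}"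
    using y by blast
qed (auto simp: G_prod SpS_Mats, blast)

lemma Aut0_eq: assumes "1 \<le> m"
  shows "Aut0_ch (Suc m) = {Gp m \<alpha> M a v | \<alpha> M a v. \<alpha> > 0 \<and> M \<in> SpS m \<and> supp (2*m) v}"
proof -
  let ?N = "Suc (Suc (2*m))" and ?w = "Suc (2*m)"
  have A0: "Aut0_ch (Suc m) = connected_component_of_set (X_of m) (mid ?N)"
    unfolding Aut0_ch_def X_of_def N_eq ..
  show ?thesis unfolding A0
  proof (intro equalityI subsetI)
    fix y assume "y \<in> connected_component_of_set (X_of m) (mid ?N)"
    then obtain T where T: "connectedin (X_of m) T" "mid ?N \<in> T" "y \<in> T"
      unfolding connected_component_of_def by auto
    have TA: "T \<subseteq> Aut_ch (Suc m)" and cT: "connected T"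
      using T(1) unfolding X_of_def connectedin_subtopology by auto
    let ?f = "\<lambda>A::mtx. A ?w ?w"
    have "connected (?f ` T)" using cont_coord2 cT by (rule connected_continuous_image)
    moreover have "?f (mid ?N) = 1" by (simp add: mid_def)
    moreover have nz: "\<forall>A\<in>T. ?f A \<noteq> 0" using TA Aut_struct(2)[OF _ assms] by auto
    ultimately have "?f y > 0"
    proof -
      assume c: "connected (?f ` T)" and one: "?f (mid ?N) = 1"
      show "?f y > 0"
      proof (rule ccontr)
        assume "\<not> ?f y > 0"
        hence "?f y \<le> 0" by simp
        hence "0 \<in> ?f ` T" using connectedD_interval[OF c, of "?f y" "?f (mid ?N)" 0] T(2,3) one by auto
        thus False using nz by auto
      qed
    qed
    thus "y \<in> {Gp m \<alpha> M a v | \<alpha> M a v. \<alpha> > 0 \<and> M \<in> SpS m \<and> supp (2*m) v}"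
      using Aut_decomp[OF _ assms] TA T(3) by blast
  next
    fix y assume "y \<in> {Gp m \<alpha> M a v | \<alpha> M a v. \<alpha> > 0 \<and> M \<in> SpS m \<and> supp (2*m) v}"
    then obtain \<alpha> M a v where "y = Gp m \<alpha> M a v" "\<alpha> > 0" "M \<in> SpS m" by blast
    thus "y \<in> connected_component_of_set (X_of m) (mid ?N)"
      using Tr_conn[OF SpS_Tr] by simp
  qed
qed



lemma mid_sm: "mid (Suc (Suc (2*m))) = sm m (mid (2*m))" unfolding sm_def mid_N ..
lemma mid_tm: "mid (Suc (Suc (2*m))) = tm m 0 (\<lambda>_. 0)" unfolding tm_def mid_N by (intro mk_eqI) auto
lemma mid_dm: "mid (Suc (Suc (2*m))) = dm m 1" unfolding dm_def mid_N by (intro mk_eqI) auto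

lemma Sp_T: "Spgrp (Suc m) \<inter> Tgrp (Suc m) = {mid (2 * Suc m)}"
proof (intro equalityI subsetI)
  fix x assume "x \<in> Spgrp (Suc m) \<inter> Tgrp (Suc m)"
  then obtain M a v where x: "x = sm m M" "x = tm m a v" "M \<in> SpS m" unfolding Spgrp_eq Tgrp_eq by blast
  have "M i j = mid (2*m) i j" if "i < 2*m" "j < 2*m" for i j
    using fun_cong[OF fun_cong[OF trans[OF x(1)[symmetric] x(2)], of "Suc i"], of "Suc j"] that
    unfolding sm_def tm_def by simp
  hence "x = sm m (mid (2*m))" unfolding x(1) sm_def by (intro mk_eqI) auto
  thus "x \<in> {mid (2 * Suc m)}" using mid_sm by simp
next
  fix x assume "x \<in> {mid (2 * Suc m)}"
  hence x: "x = mid (Suc (Suc (2*m)))" by simp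
  have "x \<in> {sm m M | M. M \<in> SpS m}" using x mid_sm mid_SpS by blast
  moreover have "x \<in> {tm m a v | a v. supp (2*m) v}" using x mid_tm[of m] 
    by (intro CollectI exI[of _ "0::real"] exI[of _ "\<lambda>_. 0::real"]) (simp add: supp_def)
  ultimately show "x \<in> Spgrp (Suc m) \<inter> Tgrp (Suc m)" unfolding Spgrp_eq Tgrp_eq by blast
qed

lemma D_ST: "Dgrp (Suc m) \<inter> {mmul (2 * Suc m) s t | s t. s \<in> Spgrp (Suc m) \<and> t \<in> Tgrp (Suc m)} = {mid (2 * Suc m)}"
proof (intro equalityI subsetI)
  fix x assume "x \<in> Dgrp (Suc m) \<inter> {mmul (2 * Suc m) s t | s t. s \<in> Spgrp (Suc m) \<and> t \<in> Tgrp (Suc m)}"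
  then obtain \<alpha> M a v where x: "x = dm m \<alpha>" "\<alpha> > 0" "x = mmul (Suc (Suc (2*m))) (sm m M) (tm m a v)"
    unfolding Spgrp_eq Tgrp_eq Dgrp_eq N_eq by blast
  have "x (Suc (2*m)) (Suc (2*m)) = 1" unfolding x(3) sm_def tm_def mmul_mk by simp
  moreover have "x (Suc (2*m)) (Suc (2*m)) = \<alpha>^2" unfolding x(1) dm_def by simp
  ultimately have "\<alpha>^2 = 1" by simp
  hence "\<alpha> = 1 \<or> \<alpha> = -1" by (simp add: power2_eq_1_iff)
  hence "\<alpha> = 1" using x(2) by auto
  thus "x \<in> {mid (2 * Suc m)}" using x(1) mid_dm by simp
next
  fix x assume "x \<in> {mid (2 * Suc m)}"
  hence x: "x = mid (Suc (Suc (2*m)))" by simp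
  have "x = mmul (Suc (Suc (2*m))) (sm m (mid (2*m))) (tm m 0 (\<lambda>_. 0))"
    using x mid_sm mid_tm mmul_mid_left[OF mid_Mats] by metis
  moreover have "sm m (mid (2*m)) \<in> {sm m M | M. M \<in> SpS m}" using mid_SpS by blast
  moreover have "tm m 0 (\<lambda>_. 0) \<in> {tm m a v | a v. supp (2*m) v}" 
    by (intro CollectI exI[of _ "0::real"] exI[of _ "\<lambda>_. 0::real"]) (simp add: supp_def)
  moreover have "x \<in> {dm m \<alpha> | \<alpha>. \<alpha> > 0}" using x mid_dm[of m] by (intro CollectI exI[of _ "1::real"]) simp
  ultimately show "x \<in> Dgrp (Suc m) \<inter> {mmul (2 * Suc m) s t | s t. s \<in> Spgrp (Suc m) \<and> t \<in> Tgrp (Suc m)}"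
    unfolding Spgrp_eq Tgrp_eq Dgrp_eq N_eq by blast
qed

lemma dot_ek: "j < k \<Longrightarrow> dot k v (ek j) = v j"
  unfolding dot_def ek_def by (simp add: if_distrib cong: if_cong)

lemma supp_mvec: "supp k (mvec k A x)" unfolding supp_def mvec_def by auto

lemma ST_comm:
  assumes M: "M \<in> SpS m" and v: "supp (2*m) v"
  shows "\<exists>v'. supp (2*m) v' \<and> mmul (Suc (Suc (2*m))) (sm m M) (tm m a v) = mmul (Suc (Suc (2*m))) (tm m a v') (sm m M)"
proof -
  define w where "w = mvec (2*m) M (Jv m v)"
  define v' where "v' = (\<lambda>i. - Jv m w i)"
  have sv': "supp (2*m) v'" unfolding v'_def supp_def mvec_def by auto
  have Jv': "Jv m v' i = w i" if "i < 2*m" for i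
    unfolding v'_def Jv_neg using JJ[OF that, of w] by simp
  have MM: "M \<in> Mats (2*m)" using M by (rule SpS_Mats)
  have d: "dot (2*m) v' (col M j) = v j" if j: "j < 2*m" for j
  proof -
    have "dot (2*m) v' (col M j) = Om m (Jv m v') (col M j)" by (simp add: Om_J)
    also have "\<dots> = Om m w (mvec (2*m) M (ek j))"
      by (rule Om_cong) (auto simp: Jv' mvec_ek[OF MM j])
    also have "\<dots> = Om m (Jv m v) (ek j)" unfolding w_def by (rule Om_mvec[OF M])
    also have "\<dots> = v j" by (simp add: Om_J dot_ek j)
    finally show ?thesis .
  qed
  have "mmul (Suc (Suc (2*m))) (sm m M) (tm m a v) = mmul (Suc (Suc (2*m))) (tm m a v') (sm m M)"
    unfolding sm_def tm_def mmul_mk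
  proof (rule mk_eqI)
    fix i assume i: "i < 2*m"
    show "0 + mvec (2*m) M (\<lambda>i. Jv m v i / 2) i = Jv m v' i / 2 + mvec (2*m) (mid (2*m)) (\<lambda>_. 0) i"
      using Jv'[OF i] unfolding w_def mvec_half by simp
  next
    fix i j assume "i < 2*m" "j < 2*m"
    show "mmul (2*m) M (mid (2*m)) i j = mmul (2*m) (mid (2*m)) M i j"
      using MM by (simp add: mmul_mid_left mmul_mid_right)
  next
    show "0 + dot (2*m) (\<lambda>_. 0) (\<lambda>i. Jv m v i / 2) + 1 * a = a + dot (2*m) v' (\<lambda>_. 0) + 1 * 0" by simp
  next
    fix j assume "j < 2*m"
    thus "dot (2*m) (\<lambda>_. 0) (col (mid (2*m)) j) + 1 * v j = dot (2*m) v' (col M j) + 1 * 0" using d by simp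
  qed simp
  thus ?thesis using sv' by blast
qed

lemma mmul_smid_r: "mmul k B (\<lambda>i j. \<alpha> * mid k i j) i j = (if i < k \<and> j < k then \<alpha> * B i j else 0)"
proof (cases "i < k \<and> j < k")
  case True
  have "(\<Sum>l<k. B i l * (\<alpha> * mid k l j)) = (\<Sum>l<k. if l = j then \<alpha> * B i l else 0)"
    by (intro sum.cong) (auto simp: mid_def)
  thus ?thesis using True by (simp add: mmul_def)
qed (auto simp: mmul_def)

lemma dot_col_smid: "j < k \<Longrightarrow> dot k r (col (\<lambda>i j. \<alpha> * mid k i j) j) = \<alpha> * r j"
proof -
  assume j: "j < k"
  have "dot k r (col (\<lambda>i j. \<alpha> * mid k i j) j) = (\<Sum>l<k. if l = j then \<alpha> * r l else 0)"
    unfolding dot_def col_def by (intro sum.cong) (auto simp: mid_def)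
  thus ?thesis using j by simp
qed

lemma Jv_scale: "Jv m (\<lambda>i. c * v i) = (\<lambda>i. c * Jv m v i)" by (rule mvec_scale)

lemma DST_comm:
  assumes M: "M \<in> SpS m"
  shows "mmul (Suc (Suc (2*m))) (dm m \<alpha>) (mmul (Suc (Suc (2*m))) (sm m M) (tm m a v))
       = mmul (Suc (Suc (2*m))) (mmul (Suc (Suc (2*m))) (sm m M) (tm m (\<alpha>^2 * a) (\<lambda>i. \<alpha> * v i))) (dm m \<alpha>)"
proof -
  have MM: "M \<in> Mats (2*m)" using M by (rule SpS_Mats)
  show ?thesis
    unfolding G_prod[OF MM] unfolding sm_def tm_def dm_def mmul_mk Gp_def
  proof (rule mk_eqI)
    fix i assume i: "i < 2*m"
    show "\<alpha> * mvec (2*m) M (Jv m v) i / 2 =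
      0 + mvec (2*m) M (\<lambda>i. Jv m (\<lambda>i. \<alpha> * v i) i / 2) i + mvec (2*m) (mmul (2*m) M (mid (2*m))) (\<lambda>_. 0) i"
      unfolding Jv_scale mvec_half using mvec_scale[of "2*m" M \<alpha> "Jv m v"] by (simp add: fun_eq_iff)
  next
    fix i j assume "i < 2*m" "j < 2*m"
    thus "\<alpha> * M i j = mmul (2*m) (mmul (2*m) M (mid (2*m))) (\<lambda>i j. \<alpha> * mid (2*m) i j) i j"
      using MM by (simp add: mmul_mid_right mmul_smid_r)
  next
    show "\<alpha>^2 * a = 0 + dot (2*m) (\<lambda>_. 0) (\<lambda>i. Jv m (\<lambda>i. \<alpha> * v i) i / 2) + 1 * (\<alpha>^2 * a) +
        dot (2*m) (\<lambda>j. dot (2*m) (\<lambda>_. 0) (col (mid (2*m)) j) + 1 * (\<alpha> * v j)) (\<lambda>_. 0) + 1 * 1 * 0" by simp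
  next
    fix j assume "j < 2*m"
    thus "\<alpha>^2 * v j = dot (2*m) (\<lambda>j. dot (2*m) (\<lambda>_. 0) (col (mid (2*m)) j) + 1 * (\<alpha> * v j))
          (col (\<lambda>i j. \<alpha> * mid (2*m) i j) j) + 1 * 1 * 0"
      by (simp add: dot_col_smid power2_eq_square)
  qed simp
qed

theorem corollary2p2:
  fixes n :: nat
  assumes "n \<ge> 2"
  shows "Aut0_ch n = {mmul (2*n) d (mmul (2*n) s t) | d s t. d \<in> Dgrp n \<and> s \<in> Spgrp n \<and> t \<in> Tgrp n}
    \<and> Spgrp n \<inter> Tgrp n = {mid (2*n)}
    \<and> Dgrp n \<inter> {mmul (2*n) s t | s t. s \<in> Spgrp n \<and> t \<in> Tgrp n} = {mid (2*n)}
    \<and> (\<forall>s\<in>Spgrp n. \<forall>t\<in>Tgrp n. \<exists>t'\<in>Tgrp n. mmul (2*n) s t = mmul (2*n) t' s)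
    \<and> (\<forall>d\<in>Dgrp n. \<forall>s\<in>Spgrp n. \<forall>t\<in>Tgrp n. \<exists>s'\<in>Spgrp n. \<exists>t'\<in>Tgrp n.
          mmul (2*n) d (mmul (2*n) s t) = mmul (2*n) (mmul (2*n) s' t') d)"
proof -
  obtain m where n: "n = Suc m" and m1: "1 \<le> m" using assms by (cases n) auto
  have NN: "2 * n = Suc (Suc (2*m))" using n by simp
  have P1: "Aut0_ch n = {mmul (2*n) d (mmul (2*n) s t) | d s t. d \<in> Dgrp n \<and> s \<in> Spgrp n \<and> t \<in> Tgrp n}"
    unfolding NN unfolding n RHS_eq Aut0_eq[OF m1] ..
  have P2: "Spgrp n \<inter> Tgrp n = {mid (2*n)}" unfolding n by (rule Sp_T)
  have P3: "Dgrp n \<inter> {mmul (2*n) s t | s t. s \<in> Spgrp n \<and> t \<in> Tgrp n} = {mid (2*n)}" unfolding n by (rule D_ST)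
  have P4: "\<forall>s\<in>Spgrp n. \<forall>t\<in>Tgrp n. \<exists>t'\<in>Tgrp n. mmul (2*n) s t = mmul (2*n) t' s"
    unfolding NN unfolding n Spgrp_eq Tgrp_eq using ST_comm by blast
  have P5: "\<forall>d\<in>Dgrp n. \<forall>s\<in>Spgrp n. \<forall>t\<in>Tgrp n. \<exists>s'\<in>Spgrp n. \<exists>t'\<in>Tgrp n.
          mmul (2*n) d (mmul (2*n) s t) = mmul (2*n) (mmul (2*n) s' t') d"
  proof (intro ballI)
    fix d s t assume "d \<in> Dgrp n" "s \<in> Spgrp n" "t \<in> Tgrp n"
    then obtain \<alpha> M a v where d: "d = dm m \<alpha>" and s: "s = sm m M" "M \<in> SpS m" and t: "t = tm m a v" "supp (2*m) v"
      unfolding n Dgrp_eq Spgrp_eq Tgrp_eq by blast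
    have "supp (2*m) (\<lambda>i. \<alpha> * v i)" using t(2) by (simp add: supp_def)
    hence "tm m (\<alpha>^2 * a) (\<lambda>i. \<alpha> * v i) \<in> Tgrp n" unfolding n Tgrp_eq by blast
    moreover have "s \<in> Spgrp n" using \<open>s \<in> Spgrp n\<close> .
    ultimately show "\<exists>s'\<in>Spgrp n. \<exists>t'\<in>Tgrp n. mmul (2*n) d (mmul (2*n) s t) = mmul (2*n) (mmul (2*n) s' t') d"
      unfolding NN d s(1) t(1) using DST_comm[OF s(2)] by blast
  qed
  show ?thesis using P1 P2 P3 P4 P5 by blast
qed


end
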